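(* Let $\beta=(\pi_\ell)_{\ell=1}^L$ be a chainable architecture with $L\ge 2$. Then $$\mathcal{B}^\beta=\bigcap_{\ell=1}^{L-1}\mathcal{B}^{\beta_\ell}=\Sigma^{\pi_1*\cdots*\pi_L}\cap\bigcap_{\ell=1}^{L-1}\mathcal{M}^{\beta_\ell}.$$
   Context: A pattern is a tuple $\pi=(a,b,c,d)$ of positive integers; $\mathbf{S}_\pi:=\mathbf{I}_a\otimes\mathbf{1}_{b\times c}\otimes\mathbf{I}_d\in\{0,1\}^{abd\times acd}$. A $\pi$-factor is a complex $abd\times acd$ matrix with support contained in that of $\mathbf{S}_\pi$; $\Sigma^\pi$ is the set of $\pi$-factors. Patterns $\pi_1=(a_1,b_1,c_1,d_1),\pi_2=(a_2,b_2,c_2,d_2)$ are chainable if $a_1c_1/a_2=b_2d_2/d_1=:r(\pi_1,\pi_2)$ is an integer, $a_1\mid a_2$, $d_2\mid d_1$; then $\pi_1*\pi_2:=(a_1,b_1d_1/d_2,a_2c_2/a_1,d_2)$. An architecture $\beta=(\pi_\ell)_{\ell=1}^L$ is a sequence of patterns with $a_\ell c_\ell d_\ell=a_{\ell+1}b_{\ell+1}d_{\ell+1}$; it is chainable if all consecutive pairs are chainable. For chainable $\beta$, $\pi_p*\cdots*\pi_q$ denotes the iterated product (well defined). $\mathcal{B}^\beta:=\{\mathbf{X}_1\cdots\mathbf{X}_L:\mathbf{X}_\ell\in\Sigma^{\pi_\ell}\}$. For $\ell\in\{1,\dots,L-1\}$, $\beta_\ell:=(\pi_1*\cdots*\pi_\ell,\;\pi_{\ell+1}*\cdots*\pi_L)$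 (a two-pattern architecture). For binary $\mathbf{L}\in\{0,1\}^{m\times r},\mathbf{R}\in\{0,1\}^{r\times n}$ let $\mathbf{U}_i:=\mathbf{L}[:,i]\mathbf{R}[i,:]$, let $\mathcal{P}(\mathbf{L},\mathbf{R})$ be the partition of $\{1,\dots,r\}$ into classes of $i\sim j\iff\mathbf{U}_i=\mathbf{U}_j$, and for a class $P$ let $R_P\times C_P$ be the support of $\mathbf{U}_i$, $i\in P$. For a chainable pair $\alpha=(\pi,\pi')$, $\mathcal{M}^\alpha$ is the set of complex matrices $\mathbf{A}$ of the size of matrices in $\mathcal{B}^\alpha$ such that $\operatorname{rank}(\mathbf{A}[R_P,C_P])\le r(\pi,\pi')$ for every $P\in\mathcal{P}(\mathbf{S}_\pi,\mathbf{S}_{\pi'})$. *)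

theory Defs
  imports Complex_Main "Jordan_Normal_Form.DL_Rank" "Jordan_Normal_Form.DL_Submatrix"
begin

text \<open>Patterns are tuples (a,b,c,d). All matrix indices are 0-based.\<close>

type_synonym pattern = "nat \<times> nat \<times> nat \<times> nat"

definition pattern_ok :: "pattern \<Rightarrow> bool" where
  "pattern_ok \<pi> = (case \<pi> of (a,b,c,d) \<Rightarrow> 0 < a \<and> 0 < b \<and> 0 < c \<and> 0 < d)"

definition pat_rows :: "pattern \<Rightarrow> nat" where
  "pat_rows \<pi> = (case \<pi> of (a,b,c,d) \<Rightarrow> a * b * d)"

definition pat_cols :: "pattern \<Rightarrow> nat" where
  "pat_cols \<pi> = (case \<pi> of (a,b,c,d) \<Rightarrow> a * c * d)"

text \<open>S_pi = I_a (x) 1_{b x c} (x) I_d, written entrywise: with row index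
  i = i1*(b*d) + i2*d + i3 and column index j = j1*(c*d) + j2*d + j3,
  the Kronecker product has entry 1 iff i1 = j1 and i3 = j3.\<close>
definition supp_mat :: "pattern \<Rightarrow> nat mat" where
  "supp_mat \<pi> = (case \<pi> of (a,b,c,d) \<Rightarrow>
     mat (a*b*d) (a*c*d) (\<lambda>(i,j). if i div (b*d) = j div (c*d) \<and> i mod d = j mod d then 1 else 0))"

definition factors :: "pattern \<Rightarrow> complex mat set" where
  "factors \<pi> = {X. X \<in> carrier_mat (pat_rows \<pi>) (pat_cols \<pi>) \<and>
      (\<forall>i<pat_rows \<pi>. \<forall>j<pat_cols \<pi>. supp_mat \<pi> $$ (i,j) = 0 \<longrightarrow> X $$ (i,j) = 0)}"

definition chainable :: "pattern \<Rightarrow> pattern \<Rightarrow> bool" where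
  "chainable \<pi>1 \<pi>2 = (case \<pi>1 of (a1,b1,c1,d1) \<Rightarrow> case \<pi>2 of (a2,b2,c2,d2) \<Rightarrow>
      a2 dvd a1 * c1 \<and> d1 dvd b2 * d2 \<and> a1 * c1 div a2 = b2 * d2 div d1 \<and>
      a1 dvd a2 \<and> d2 dvd d1)"

definition chain_r :: "pattern \<Rightarrow> pattern \<Rightarrow> nat" where
  "chain_r \<pi>1 \<pi>2 = (case \<pi>1 of (a1,b1,c1,d1) \<Rightarrow> case \<pi>2 of (a2,b2,c2,d2) \<Rightarrow> a1 * c1 div a2)"

definition pstar :: "pattern \<Rightarrow> pattern \<Rightarrow> pattern" where
  "pstar \<pi>1 \<pi>2 = (case \<pi>1 of (a1,b1,c1,d1) \<Rightarrow> case \<pi>2 of (a2,b2,c2,d2) \<Rightarrow>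
      (a1, b1 * d1 div d2, a2 * c2 div a1, d2))"

definition pstar_list :: "pattern list \<Rightarrow> pattern" where
  "pstar_list ps = foldl pstar (hd ps) (tl ps)"

definition architecture :: "pattern list \<Rightarrow> bool" where
  "architecture \<beta> = (\<beta> \<noteq> [] \<and> (\<forall>\<pi>\<in>set \<beta>. pattern_ok \<pi>) \<and>
      (\<forall>l. Suc l < length \<beta> \<longrightarrow> pat_cols (\<beta> ! l) = pat_rows (\<beta> ! Suc l)))"

definition chainable_arch :: "pattern list \<Rightarrow> bool" where
  "chainable_arch \<beta> = (architecture \<beta> \<and>
      (\<forall>l. Suc l < length \<beta> \<longrightarrow> chainable (\<beta> ! l) (\<beta> ! Suc l)))"

fun mprod :: "'a::semiring_1 mat list \<Rightarrow> 'a mat" where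
  "mprod [] = 1\<^sub>m 0"
| "mprod [X] = X"
| "mprod (X # Y # Xs) = X * mprod (Y # Xs)"

definition Bset :: "pattern list \<Rightarrow> complex mat set" where
  "Bset \<beta> = {mprod Xs | Xs. length Xs = length \<beta> \<and> (\<forall>l<length \<beta>. Xs ! l \<in> factors (\<beta> ! l))}"

definition beta_split :: "pattern list \<Rightarrow> nat \<Rightarrow> pattern \<times> pattern" where
  "beta_split \<beta> l = (pstar_list (take l \<beta>), pstar_list (drop l \<beta>))"

definition Umat :: "nat mat \<Rightarrow> nat mat \<Rightarrow> nat \<Rightarrow> nat mat" where
  "Umat L R i = mat (dim_row L) (dim_col R) (\<lambda>(k,j). L $$ (k,i) * R $$ (i,j))"

definition Ppart :: "nat mat \<Rightarrow> nat mat \<Rightarrow> nat set set" where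
  "Ppart L R = {{j. j < dim_col L \<and> Umat L R j = Umat L R i} | i. i < dim_col L}"

definition RP :: "nat mat \<Rightarrow> nat mat \<Rightarrow> nat set \<Rightarrow> nat set" where
  "RP L R P = {k. k < dim_row L \<and> (\<exists>i\<in>P. \<exists>j<dim_col R. Umat L R i $$ (k,j) \<noteq> 0)}"

definition CP :: "nat mat \<Rightarrow> nat mat \<Rightarrow> nat set \<Rightarrow> nat set" where
  "CP L R P = {j. j < dim_col R \<and> (\<exists>i\<in>P. \<exists>k<dim_row L. Umat L R i $$ (k,j) \<noteq> 0)}"

definition Mset :: "pattern \<times> pattern \<Rightarrow> complex mat set" where
  "Mset \<alpha> = (case \<alpha> of (\<pi>, \<pi>') \<Rightarrow>
     {A. A \<in> carrier_mat (pat_rows \<pi>) (pat_cols \<pi>') \<and>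
       (\<forall>P\<in>Ppart (supp_mat \<pi>) (supp_mat \<pi>').
          let Rs = RP (supp_mat \<pi>) (supp_mat \<pi>') P; Cs = CP (supp_mat \<pi>) (supp_mat \<pi>') P;
              Asub = submatrix A Rs Cs
          in vec_space.rank (dim_row Asub) Asub \<le> chain_r \<pi> \<pi>')})"

end

theory Submission
  imports Defs
begin

lemma rank_sum_le:
  fixes F :: "nat \<Rightarrow> nat \<Rightarrow> complex" and G :: "nat \<Rightarrow> nat \<Rightarrow> complex"
  shows "vec_space.rank n (mat n m (\<lambda>(a,b). \<Sum>x<r. F a x * G x b)) \<le> r"
proof (induction r)
  case 0
  have "mat n m (\<lambda>(a,b). \<Sum>x<0. F a x * G x b) = 0\<^sub>m n m" by (rule eq_matI) auto
  then show ?case using vec_space.rank_0I by (metis le_refl)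
next
  case (Suc r)
  have eq: "mat n m (\<lambda>(a,b). \<Sum>x<Suc r. F a x * G x b) =
     mat n m (\<lambda>(a,b). \<Sum>x<r. F a x * G x b) + mat n m (\<lambda>(a,b). F a r * G r b)"
    by (rule eq_matI) auto
  have "vec_space.rank n (mat n m (\<lambda>(a,b). \<Sum>x<Suc r. F a x * G x b)) \<le>
     vec_space.rank n (mat n m (\<lambda>(a,b). \<Sum>x<r. F a x * G x b)) + vec_space.rank n (mat n m (\<lambda>(a,b). F a r * G r b))"
    unfolding eq by (rule vec_space.rank_subadditive) auto
  moreover have "vec_space.rank n (mat n m (\<lambda>(a,b). F a r * G r b)) \<le> 1"
    by (rule vec_space.rank_le_1_product_entries[of _ n m "\<lambda>a. F a r" "\<lambda>b. G r b"]) auto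
  ultimately show ?case using Suc.IH by linarith
qed

lemma pick_bound:
  fixes n :: nat
  assumes "a < card {i. i < n \<and> i \<in> I}"
  shows "pick I a \<in> I" "pick I a < n"
proof -
  have "a < card I \<or> infinite I"
  proof (cases "finite I")
    case True
    have "{i. i < n \<and> i \<in> I} \<subseteq> I" by blast
    then have "card {i. i < n \<and> i \<in> I} \<le> card I" using True by (rule card_mono[rotated])
    then show ?thesis using assms by auto
  qed auto
  then show "pick I a \<in> I" by (rule pick_in_set)
  show "pick I a < n" using pick_le[OF assms] .
qed

lemma card_less_pos:
  fixes i n :: nat
  assumes "i < n" "i \<in> I"
  shows "card {a\<in>I. a < i} < card {i. i < n \<and> i \<in> I}"
proof -
  have "{a\<in>I. a < i} \<subset> {i. i < n \<and> i \<in> I}" using assms by auto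
  moreover have "finite {i. i < n \<and> i \<in> I}" by (rule finite_subset[of _ "{..<n}"]) auto
  ultimately show ?thesis by (intro psubset_card_mono)
qed

lemma pick_bij:
  "bij_betw (pick J) {..<card {j. j < m \<and> j \<in> J}} {j. j < m \<and> j \<in> J}"
proof -
  let ?q = "card {j. j < m \<and> j \<in> J}"
  have fin: "?q \<le> card J \<or> infinite J"
    by (cases "finite J") (auto intro!: card_mono)
  have "inj_on (pick J) {..<?q}"
  proof (rule inj_onI)
    fix x y assume "x \<in> {..<?q}" "y \<in> {..<?q}" "pick J x = pick J y"
    then show "x = y" using pick_mono[of y J x] pick_mono[of x J y] fin
      by (metis lessThan_iff linorder_neqE_nat order_less_le_trans order_less_irrefl)
  qed
  moreover have "pick J ` {..<?q} = {j. j < m \<and> j \<in> J}"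
  proof
    show "pick J ` {..<?q} \<subseteq> {j. j < m \<and> j \<in> J}" using pick_bound by auto
    show "{j. j < m \<and> j \<in> J} \<subseteq> pick J ` {..<?q}"
    proof
      fix j assume j: "j \<in> {j. j < m \<and> j \<in> J}"
      then have "pick J (card {a\<in>J. a < j}) = j" by (intro pick_card_in_set) auto
      moreover have "card {a\<in>J. a < j} < ?q" using j card_less_pos by auto
      ultimately show "j \<in> pick J ` {..<?q}" by force
    qed
  qed
  ultimately show ?thesis unfolding bij_betw_def by auto
qed

lemma rank_le_of_frank:
  fixes A :: "complex mat"
  assumes "\<forall>i\<in>I. \<forall>j\<in>J. i < dim_row A \<longrightarrow> j < dim_col A \<longrightarrow> A $$ (i,j) = (\<Sum>x<r. f i x * g x j)"
  shows "vec_space.rank (dim_row (submatrix A I J)) (submatrix A I J) \<le> r"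
proof -
  define p where "p = card {i. i < dim_row A \<and> i \<in> I}"
  define q where "q = card {j. j < dim_col A \<and> j \<in> J}"
  define B where "B = mat p q (\<lambda>(a,b). \<Sum>x<r. f (pick I a) x * g x (pick J b))"
  have "submatrix A I J = B"
  proof (rule eq_matI)
    show "dim_row (submatrix A I J) = dim_row B" unfolding B_def p_def by (simp add: dim_submatrix)
    show "dim_col (submatrix A I J) = dim_col B" unfolding B_def q_def by (simp add: dim_submatrix)
    fix a b assume ab: "a < dim_row B" "b < dim_col B"
    then have ab': "a < p" "b < q" unfolding B_def by simp_all
    have 1: "submatrix A I J $$ (a, b) = A $$ (pick I a, pick J b)"
      using submatrix_index ab' unfolding p_def q_def by blast
    have 2: "B $$ (a,b) = (\<Sum>x<r. f (pick I a) x * g x (pick J b))"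
      unfolding B_def using ab' by simp
    have "pick I a \<in> I" "pick I a < dim_row A" using pick_bound ab'(1) unfolding p_def by blast+
    moreover have "pick J b \<in> J" "pick J b < dim_col A" using pick_bound ab'(2) unfolding q_def by blast+
    ultimately show "submatrix A I J $$ (a, b) = B $$ (a, b)" unfolding 1 2 using assms by simp
  qed
  moreover have "dim_row (submatrix A I J) = p" unfolding p_def by (simp add: dim_submatrix)
  ultimately show ?thesis using rank_sum_le[where n=p and m=q and r=r and F="\<lambda>a x. f (pick I a) x" and G="\<lambda>x b. g x (pick J b)"] unfolding B_def by simp
qed

lemma rank_fact_mat:
  fixes M :: "complex mat"
  assumes M: "M \<in> carrier_mat n m" and rk: "vec_space.rank n M \<le> r"
  shows "\<exists>w g. \<forall>i<n. \<forall>j<m. M $$ (i,j) = (\<Sum>x<r. (\<Sum>j'<m. M $$ (i,j') * w j' x) * g x j)"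
proof -
  interpret vs: vec_space "TYPE(complex)" n .
  obtain U where maxU: "maximal U (\<lambda>T. T \<subseteq> set (cols M) \<and> vs.lin_indpt T)"
    using maximal_exists[of "(\<lambda>T. T \<subseteq> set (cols M) \<and> vs.lin_indpt T)" "card (set (cols M))" "{}"]
    by (meson List.finite_set card_mono empty_iff empty_subsetI vs.finite_lin_indpt2 rev_finite_subset)
  have rkU: "vs.rank M = card U" using vs.rank_card_indpt[OF M maxU] .
  have Usub: "U \<subseteq> set (cols M)" and Uli: "vs.lin_indpt U" using maxU unfolding maximal_def by auto
  have finU: "finite U" using Usub finite_subset by blast
  have colsC: "set (cols M) \<subseteq> carrier_vec n" using M cols_dim by blast
  have UC: "U \<subseteq> carrier_vec n" using Usub colsC by blast
  have inspan: "col M j \<in> vs.span U" if j: "j < m" for j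
  proof (rule ccontr)
    assume ns: "col M j \<notin> vs.span U"
    have cm: "col M j \<in> set (cols M)" using j M by (simp add: cols_def)
    have cC: "col M j \<in> carrier_vec n" using cm colsC by blast
    have nU: "col M j \<notin> U" using ns vs.in_own_span[OF UC] by blast
    have "vs.lin_indpt (U \<union> {col M j})"
      using vs.lin_dep_iff_in_span[OF UC Uli _ nU] cC ns by auto
    moreover have "U \<union> {col M j} \<subseteq> set (cols M)" using Usub cm by auto
    ultimately have "U \<union> {col M j} = U" using maxU unfolding maximal_def by blast
    then show False using nU by blast
  qed
  define a where "a j = (SOME a. vs.lincomb a U = col M j)" for j
  have a: "vs.lincomb (a j) U = col M j" if "j < m" for j
  proof -
    have "\<exists>a. vs.lincomb a U = col M j"
      using vs.finite_in_span[OF finU _ inspan[OF that]] UC by auto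
    then show ?thesis unfolding a_def by (metis (mono_tags, lifting) someI_ex)
  qed
  obtain us where us: "set us = U" "distinct us" using finite_distinct_list[OF finU] by blast
  have lus: "length us \<le> r" using rk rkU us distinct_card by fastforce
  define idx where "idx u = (SOME j. j < m \<and> col M j = u)" for u
  have idx: "idx u < m \<and> col M (idx u) = u" if "u \<in> U" for u
  proof -
    have "u \<in> set (cols M)" using that Usub by blast
    then obtain j where "j < dim_col M" "u = col M j" unfolding cols_def by auto
    then have "\<exists>j. j < m \<and> col M j = u" using M by auto
    then show ?thesis unfolding idx_def by (rule someI_ex)
  qed
  define w where "w j' x = (if x < length us \<and> j' = idx (us ! x) then 1 else (0::complex))" for j' x
  define g where "g x j = (if x < length us then a j (us ! x) else 0)" for x j
  have "\<forall>i<n. \<forall>j<m. M $$ (i,j) = (\<Sum>x<r. (\<Sum>j'<m. M $$ (i,j') * w j' x) * g x j)"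
  proof (intro allI impI)
    fix i j assume i: "i < n" and j: "j < m"
    have inner: "(\<Sum>j'<m. M $$ (i,j') * w j' x) = (if x < length us then M $$ (i, idx (us ! x)) else 0)" for x
    proof (cases "x < length us")
      case True
      then have "us ! x \<in> U" using us by auto
      then have "idx (us ! x) < m" using idx by auto
      then show ?thesis using True unfolding w_def
        by (simp add: sum.delta' if_distrib cong: if_cong)
    qed (simp add: w_def)
    have "M $$ (i,j) = col M j $ i" using i j M by auto
    also have "\<dots> = vs.lincomb (a j) U $ i" using a[OF j] by simp
    also have "\<dots> = (\<Sum>u\<in>U. a j u * u $ i)" using vs.lincomb_index[OF i UC] by simp
    also have "\<dots> = (\<Sum>x<length us. a j (us ! x) * (us ! x) $ i)"
      using sum.reindex_bij_betw[OF bij_betw_nth[OF us(2) refl us(1)[symmetric]], of "\<lambda>u. a j u * u $ i"]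
      by simp
    also have "\<dots> = (\<Sum>x<length us. M $$ (i, idx (us ! x)) * g x j)"
    proof (rule sum.cong[OF refl])
      fix x assume "x \<in> {..<length us}"
      then have x: "x < length us" "us ! x \<in> U" using us by auto
      have d: "i < dim_row M" "idx (us ! x) < dim_col M" using idx[OF x(2)] i M by auto
      have "(us ! x) $ i = col M (idx (us ! x)) $ i" using idx[OF x(2)] by simp
      also have "\<dots> = M $$ (i, idx (us ! x))" using d by simp
      finally have "(us ! x) $ i = M $$ (i, idx (us ! x))" .
      then show "a j (us ! x) * (us ! x) $ i = M $$ (i, idx (us ! x)) * g x j"
        using x unfolding g_def by simp
    qed
    also have "\<dots> = (\<Sum>x<r. (if x < length us then M $$ (i, idx (us ! x)) else 0) * g x j)"
    proof -
      have "(\<Sum>x<r. (if x < length us then M $$ (i, idx (us ! x)) else 0) * g x j) =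
            (\<Sum>x<length us. (if x < length us then M $$ (i, idx (us ! x)) else 0) * g x j)"
        using lus by (intro sum.mono_neutral_right) auto
      then show ?thesis by simp
    qed
    finally show "M $$ (i,j) = (\<Sum>x<r. (\<Sum>j'<m. M $$ (i,j') * w j' x) * g x j)"
      unfolding inner .
  qed
  then show ?thesis by blast
qed

lemma rank_fact:
  fixes A :: "complex mat"
  assumes "vec_space.rank (dim_row (submatrix A I J)) (submatrix A I J) \<le> r"
  shows "\<exists>w g. \<forall>i\<in>I. \<forall>j\<in>J. i < dim_row A \<longrightarrow> j < dim_col A \<longrightarrow>
     A $$ (i,j) = (\<Sum>x<r. (\<Sum>j'\<in>{j'. j' < dim_col A \<and> j' \<in> J}. A $$ (i,j') * w j' x) * g x j)"
proof -
  let ?p = "card {i. i < dim_row A \<and> i \<in> I}" and ?q = "card {j. j < dim_col A \<and> j \<in> J}"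
  let ?M = "submatrix A I J"
  have M: "?M \<in> carrier_mat ?p ?q" by (rule carrier_matI) (simp_all only: dim_submatrix)
  have rk: "vec_space.rank ?p ?M \<le> r" using assms by (simp only: dim_submatrix)
  obtain w0 g0 where wg: "\<forall>a<?p. \<forall>b<?q. ?M $$ (a,b) = (\<Sum>x<r. (\<Sum>b'<?q. ?M $$ (a,b') * w0 b' x) * g0 x b)"
    using rank_fact_mat[OF M rk] by blast
  define w where "w j' x = w0 (card {a\<in>J. a < j'}) x" for j' x
  define g where "g x j = g0 x (card {a\<in>J. a < j})" for x j
  have main: "\<forall>i\<in>I. \<forall>j\<in>J. i < dim_row A \<longrightarrow> j < dim_col A \<longrightarrow>
     A $$ (i,j) = (\<Sum>x<r. (\<Sum>j'\<in>{j'. j' < dim_col A \<and> j' \<in> J}. A $$ (i,j') * w j' x) * g x j)"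
  proof (intro ballI impI)
    fix i j assume ij: "i \<in> I" "j \<in> J" "i < dim_row A" "j < dim_col A"
    let ?a = "card {a\<in>I. a < i}" and ?b = "card {a\<in>J. a < j}"
    have a: "?a < ?p" "pick I ?a = i" using card_less_pos[of i "dim_row A" I] pick_card_in_set[of i I] ij by simp_all
    have b: "?b < ?q" "pick J ?b = j" using card_less_pos[of j "dim_col A" J] pick_card_in_set[of j J] ij by simp_all
    have inner: "(\<Sum>b'<?q. ?M $$ (?a,b') * w0 b' x) =
        (\<Sum>j'\<in>{j'. j' < dim_col A \<and> j' \<in> J}. A $$ (i,j') * w j' x)" for x
    proof -
      have "(\<Sum>j'\<in>{j'. j' < dim_col A \<and> j' \<in> J}. A $$ (i,j') * w j' x) =
            (\<Sum>b'<?q. A $$ (i, pick J b') * w (pick J b') x)"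
        using sum.reindex_bij_betw[OF pick_bij[of J "dim_col A"], of "\<lambda>j'. A $$ (i,j') * w j' x"] by (rule sym)
      also have "\<dots> = (\<Sum>b'<?q. ?M $$ (?a,b') * w0 b' x)"
      proof (rule sum.cong[OF refl])
        fix b' assume "b' \<in> {..<?q}"
        then have b': "b' < ?q" by (simp only: lessThan_iff)
        have "card {a\<in>J. a < pick J b'} = b'"
        proof (rule card_pick)
          show "b' < card J \<or> infinite J"
          proof (cases "finite J")
            case True
            have "{j. j < dim_col A \<and> j \<in> J} \<subseteq> J" by blast
            then have "?q \<le> card J" using True by (rule card_mono[rotated])
            then have "b' < card J" using b' by linarith
            then show ?thesis by (rule disjI1)
          next
            case False
            then show ?thesis by (rule disjI2)
          qed
        qed
        then show "A $$ (i, pick J b') * w (pick J b') x = ?M $$ (?a,b') * w0 b' x"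
          unfolding w_def submatrix_index[OF a(1) b'] a(2) by (simp only:)
      qed
      finally show ?thesis by (rule sym)
    qed
    have "A $$ (i,j) = ?M $$ (?a, ?b)" unfolding submatrix_index[OF a(1) b(1)] a(2) b(2) by (rule refl)
    also have "\<dots> = (\<Sum>x<r. (\<Sum>b'<?q. ?M $$ (?a,b') * w0 b' x) * g0 x ?b)" by (rule wg[rule_format, OF a(1) b(1)])
    finally show "A $$ (i,j) = (\<Sum>x<r. (\<Sum>j'\<in>{j'. j' < dim_col A \<and> j' \<in> J}. A $$ (i,j') * w j' x) * g x j)"
      unfolding inner g_def .
  qed
  show ?thesis by (rule exI[of _ w], rule exI[of _ g], rule main)
qed

lemma div_mult_add_less: "(y::nat) < m \<Longrightarrow> (X*m + y) div m = X"
  by simp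

lemma mod_mult_add_dvd: "(d::nat) dvd m \<Longrightarrow> (X*m + y) mod d = y mod d"
  by (metis mod_mult_self3 dvd_def mod_mod_cancel mult.assoc mult.commute)

lemma lt_mult_div: "(i::nat) < a*m \<Longrightarrow> i div m < a"
proof (cases "m = 0")
  case False
  assume "i < a*m"
  then show ?thesis using False by (simp add: div_less_iff_less_mult)
qed simp

lemma lt_block: "(X::nat) < a \<Longrightarrow> y < m \<Longrightarrow> X*m + y < a*m"
proof -
  assume "X < a" "y < m"
  then have "X*m + y < X*m + m" by simp
  also have "\<dots> = (Suc X)*m" by simp
  also have "\<dots> \<le> a*m" using \<open>X < a\<close> by (intro mult_le_mono1) simp
  finally show ?thesis .
qed

lemma supp_mat_dims: "dim_row (supp_mat (a,b,c,d)) = a*b*d" "dim_col (supp_mat (a,b,c,d)) = a*c*d"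
  unfolding supp_mat_def by simp_all

lemma supp_mat_entry: "i < a*b*d \<Longrightarrow> j < a*c*d \<Longrightarrow>
  supp_mat (a,b,c,d) $$ (i,j) = (if i div (b*d) = j div (c*d) \<and> i mod d = j mod d then 1 else 0)"
  unfolding supp_mat_def by simp

lemma factors_iff: "X \<in> factors (a,b,c,d) \<longleftrightarrow> X \<in> carrier_mat (a*b*d) (a*c*d) \<and>
   (\<forall>i<a*b*d. \<forall>j<a*c*d. \<not> (i div (b*d) = j div (c*d) \<and> i mod d = j mod d) \<longrightarrow> X $$ (i,j) = 0)"
  unfolding factors_def pat_rows_def pat_cols_def by (simp add: supp_mat_entry) blast

definition Rk :: "pattern \<Rightarrow> nat \<Rightarrow> nat set" where
  "Rk p k = (case p of (a,b,c,d) \<Rightarrow> {i. i < a*b*d \<and> i div (b*d) = k div (c*d) \<and> i mod d = k mod d})"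

definition Ck :: "pattern \<Rightarrow> nat \<Rightarrow> nat set" where
  "Ck q k = (case q of (a,b,c,d) \<Rightarrow> {j. j < a*c*d \<and> j div (c*d) = k div (b*d) \<and> j mod d = k mod d})"

locale tp =
  fixes a1 b1 c1 d1 a2 b2 c2 d2 :: nat
  assumes pos: "0<a1" "0<b1" "0<c1" "0<d1" "0<a2" "0<b2" "0<c2" "0<d2"
  and ch: "chainable (a1,b1,c1,d1) (a2,b2,c2,d2)"
  and dimeq: "a1*c1*d1 = a2*b2*d2"
begin

abbreviation "rr \<equiv> a1*c1 div a2"
abbreviation "ss \<equiv> a2 div a1"
abbreviation "tt \<equiv> d1 div d2"
abbreviation "NN \<equiv> a1*c1*d1"

lemma chd: "a2 dvd a1*c1" "d1 dvd b2*d2" "a1*c1 div a2 = b2*d2 div d1" "a1 dvd a2" "d2 dvd d1"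
  using ch unfolding chainable_def by simp_all

lemma r1: "a2 * rr = a1*c1" using chd(1) by simp
lemma r2: "rr * d1 = b2*d2" using chd(2,3) by simp
lemma rpos: "0 < rr"
proof -
  have "0 < a1*c1" using pos by simp
  then show ?thesis using r1 by (metis gr0I mult_0_right)
qed
lemma s1: "a2 = a1 * ss" using chd(4) by simp
lemma t1: "d1 = d2 * tt" using chd(5) by simp
lemma N1: "NN = a2*(b2*d2)" using dimeq by (simp add: mult.assoc)
lemma s2: "c1*d1 = ss*(b2*d2)"
proof -
  have "a1*(c1*d1) = a1*(ss*(b2*d2))" using dimeq s1 by (metis mult.assoc)
  then show ?thesis using pos(1) by simp
qed
lemma B2pos: "0 < b2*d2" using pos by simp

definition e :: "nat \<Rightarrow> nat \<Rightarrow> nat" where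
  "e k x = k div (b2*d2) * (b2*d2) + x*d1 + k mod d1"

lemma e_props:
  assumes k: "k < NN" and x: "x < rr"
  shows "e k x < NN" "e k x div (b2*d2) = k div (b2*d2)" "e k x mod d1 = k mod d1"
        "(e k x div d1) mod rr = x"
proof -
  have m: "k mod d1 < d1" using pos(4) by simp
  have xm: "x*d1 + k mod d1 < b2*d2"
  proof -
    have "x*d1 + k mod d1 < rr*d1" using lt_block[OF x m] .
    then show ?thesis using r2 by simp
  qed
  have ed: "e k x = k div (b2*d2) * (b2*d2) + (x*d1 + k mod d1)" unfolding e_def by simp
  show "e k x div (b2*d2) = k div (b2*d2)" unfolding ed using div_mult_add_less[OF xm] .
  have q: "k div (b2*d2) < a2" using k N1 lt_mult_div by simp
  show "e k x < NN" unfolding ed N1 using lt_block[OF q xm] .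
  have dv: "d1 dvd b2*d2" using chd(2) .
  show "e k x mod d1 = k mod d1" unfolding ed mod_mult_add_dvd[OF dv] by simp
  have "e k x = (k div (b2*d2) * rr + x) * d1 + k mod d1" unfolding e_def r2[symmetric]
    by (simp add: algebra_simps)
  then have "e k x div d1 = k div (b2*d2) * rr + x" using m by simp
  then show "(e k x div d1) mod rr = x" using x by simp
qed

lemma e_surj:
  assumes "k' div (b2*d2) = k div (b2*d2)" "k' mod d1 = k mod d1"
  shows "k' = e k ((k' div d1) mod rr)"
proof -
  have "k' = k' div d1 * d1 + k' mod d1" by simp
  also have "k' div d1 = k' div d1 div rr * rr + (k' div d1) mod rr" by (rule div_mult_mod_eq[symmetric])
  also have "k' div d1 div rr = k' div (b2*d2)" using r2 by (metis div_mult2_eq mult.commute)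
  finally have "k' = (k' div (b2*d2) * rr + (k' div d1) mod rr) * d1 + k' mod d1" .
  then have "k' = k' div (b2*d2) * (rr*d1) + (k' div d1) mod rr * d1 + k' mod d1"
    by (simp add: algebra_simps)
  then show ?thesis unfolding e_def using assms r2 by simp
qed

lemma e_inj: "k < NN \<Longrightarrow> inj_on (e k) {..<rr}"
  by (intro inj_onI) (metis e_props(4) lessThan_iff)

end

context tp begin

lemma Rk_p: "Rk (a1,b1,c1,d1) k = {i. i < a1*b1*d1 \<and> i div (b1*d1) = k div (c1*d1) \<and> i mod d1 = k mod d1}"
  unfolding Rk_def by simp
lemma Ck_q: "Ck (a2,b2,c2,d2) k = {j. j < a2*c2*d2 \<and> j div (c2*d2) = k div (b2*d2) \<and> j mod d2 = k mod d2}"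
  unfolding Ck_def by simp

lemma div_c1d1: "k div (c1*d1) = k div (b2*d2) div ss"
  unfolding s2 by (metis div_mult2_eq mult.commute)

lemma mod_d2: "k mod d2 = k mod d1 mod d2"
  using chd(5) by (simp add: mod_mod_cancel)

lemma key_R: "k' div (b2*d2) = k div (b2*d2) \<Longrightarrow> k' mod d1 = k mod d1 \<Longrightarrow> Rk (a1,b1,c1,d1) k' = Rk (a1,b1,c1,d1) k"
  unfolding Rk_p div_c1d1 by simp

lemma key_C: "k' div (b2*d2) = k div (b2*d2) \<Longrightarrow> k' mod d1 = k mod d1 \<Longrightarrow> Ck (a2,b2,c2,d2) k' = Ck (a2,b2,c2,d2) k"
  unfolding Ck_q using mod_d2[of k] mod_d2[of k'] by simp

lemma NN2: "NN = a2*b2*d2" using dimeq .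

lemma S1_iff: "i < a1*b1*d1 \<Longrightarrow> k < NN \<Longrightarrow> (supp_mat (a1,b1,c1,d1) $$ (i,k) \<noteq> 0) = (i \<in> Rk (a1,b1,c1,d1) k)"
  unfolding Rk_p by (simp add: supp_mat_entry)

lemma S2_iff: "k < NN \<Longrightarrow> j < a2*c2*d2 \<Longrightarrow> (supp_mat (a2,b2,c2,d2) $$ (k,j) \<noteq> 0) = (j \<in> Ck (a2,b2,c2,d2) k)"
  unfolding Ck_q using NN2 by (simp add: supp_mat_entry eq_commute[of "j div (c2*d2)"] eq_commute[of "j mod d2"])

lemma fac_p: "X \<in> factors (a1,b1,c1,d1) \<Longrightarrow> i < a1*b1*d1 \<Longrightarrow> k < NN \<Longrightarrow> i \<notin> Rk (a1,b1,c1,d1) k \<Longrightarrow> X $$ (i,k) = 0"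
  unfolding factors_iff Rk_p by simp

lemma fac_q: "Y \<in> factors (a2,b2,c2,d2) \<Longrightarrow> k < NN \<Longrightarrow> j < a2*c2*d2 \<Longrightarrow> j \<notin> Ck (a2,b2,c2,d2) k \<Longrightarrow> Y $$ (k,j) = 0"
  unfolding factors_iff Ck_q using NN2 by (simp add: eq_commute[of "j div (c2*d2)"] eq_commute[of "j mod d2"])

lemma mult_entry:
  assumes "X \<in> carrier_mat m NN" "Y \<in> carrier_mat NN n" "i < m" "j < n"
  shows "(X*Y) $$ (i,j) = (\<Sum>k<NN. X $$ (i,k) * Y $$ (k,j))"
  using assms by (simp add: index_mult_mat scalar_prod_def atLeast0LessThan)

lemma class_sum:
  fixes h :: "nat \<Rightarrow> complex"
  assumes k: "k < NN" and hz: "\<And>k'. k' < NN \<Longrightarrow> h k' \<noteq> 0 \<Longrightarrow> k' div (b2*d2) = k div (b2*d2) \<and> k' mod d1 = k mod d1"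
  shows "(\<Sum>k'<NN. h k') = (\<Sum>x<rr. h (e k x))"
proof -
  have sub: "e k ` {..<rr} \<subseteq> {..<NN}"
  proof (rule image_subsetI)
    fix x assume "x \<in> {..<rr}"
    then show "e k x \<in> {..<NN}" using e_props(1)[OF k] by simp
  qed
  have zero: "\<forall>i\<in>{..<NN} - e k ` {..<rr}. h i = 0"
  proof
    fix k' assume k': "k' \<in> {..<NN} - e k ` {..<rr}"
    show "h k' = 0"
    proof (rule ccontr)
      assume "h k' \<noteq> 0"
      moreover have "k' < NN" using k' by simp
      ultimately have kk: "k' div (b2*d2) = k div (b2*d2) \<and> k' mod d1 = k mod d1" using hz by blast
      have ke: "k' = e k ((k' div d1) mod rr)" by (rule e_surj[OF conjunct1[OF kk] conjunct2[OF kk]])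
      have "(k' div d1) mod rr < rr" using rpos by simp
      then have "k' \<in> e k ` {..<rr}" by (intro image_eqI[where f="e k" and x="(k' div d1) mod rr", OF ke]) simp
      then show False using k' by blast
    qed
  qed
  have "(\<Sum>k'<NN. h k') = (\<Sum>k'\<in>e k ` {..<rr}. h k')"
    using sum.mono_neutral_left[OF finite_lessThan sub zero] by (rule sym)
  also have "\<dots> = (\<Sum>x<rr. h (e k x))" by (rule sum.reindex[OF e_inj[OF k], unfolded comp_def])
  finally show ?thesis .
qed

lemma pstar_eq: "pstar (a1,b1,c1,d1) (a2,b2,c2,d2) = (a1, b1*d1 div d2, ss*c2, d2)"
proof -
  have "a2*c2 = a1*ss*c2" using arg_cong[OF s1, of "\<lambda>x. x*c2"] .
  then have "a2*c2 div a1 = ss*c2" using pos(1) by (simp only: mult.assoc nonzero_mult_div_cancel_left)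
  then show ?thesis unfolding pstar_def by simp
qed

lemma bd2: "(b1*d1 div d2)*d2 = b1*d1"
  using chd(5) by (metis dvd_div_mult_self dvd_mult)

lemma PS_dims: "a1*(b1*d1 div d2)*d2 = a1*b1*d1" "a1*(ss*c2)*d2 = a2*c2*d2"
  subgoal by (simp only: mult.assoc bd2)
  subgoal by (simp only: mult.assoc[symmetric] s1[symmetric])
  done

definition PS :: "nat \<Rightarrow> nat \<Rightarrow> bool" where
  "PS i j \<longleftrightarrow> i div (b1*d1) = j div (c2*d2) div ss \<and> i mod d2 = j mod d2"

lemma factors_pstar_iff: "X \<in> factors (pstar (a1,b1,c1,d1) (a2,b2,c2,d2)) \<longleftrightarrow>
   X \<in> carrier_mat (a1*b1*d1) (a2*c2*d2) \<and> (\<forall>i<a1*b1*d1. \<forall>j<a2*c2*d2. \<not> PS i j \<longrightarrow> X $$ (i,j) = 0)"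
proof -
  have "j div ((ss*c2)*d2) = j div (c2*d2) div ss" for j
    by (metis div_mult2_eq mult.commute mult.assoc)
  then show ?thesis unfolding pstar_eq factors_iff PS_dims bd2 PS_def by simp
qed

lemma supp_prod:
  assumes k: "k < NN" and i: "i \<in> Rk (a1,b1,c1,d1) k" and j: "j \<in> Ck (a2,b2,c2,d2) k"
  shows "PS i j"
proof -
  have "i div (b1*d1) = k div (c1*d1)" "i mod d1 = k mod d1" using i unfolding Rk_p by simp_all
  moreover have "j div (c2*d2) = k div (b2*d2)" "j mod d2 = k mod d2" using j unfolding Ck_q by simp_all
  ultimately show ?thesis unfolding PS_def div_c1d1 using mod_d2[of i] mod_d2[of k] by simp
qed

definition k0 :: "nat \<Rightarrow> nat \<Rightarrow> nat" where
  "k0 i j = j div (c2*d2) * (b2*d2) + i mod d1"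

lemma supp_cover:
  assumes i: "i < a1*b1*d1" and j: "j < a2*c2*d2" and ps: "PS i j"
  shows "k0 i j < NN" "i \<in> Rk (a1,b1,c1,d1) (k0 i j)" "j \<in> Ck (a2,b2,c2,d2) (k0 i j)"
    "k0 i j div (b2*d2) = j div (c2*d2)" "k0 i j mod d1 = i mod d1"
proof -
  have m: "i mod d1 < b2*d2"
  proof -
    have "i mod d1 < d1" using pos(4) by simp
    also have "d1 \<le> rr*d1" using rpos by simp
    finally show ?thesis using r2 by simp
  qed
  show kd: "k0 i j div (b2*d2) = j div (c2*d2)" unfolding k0_def using div_mult_add_less[OF m] .
  have jq: "j div (c2*d2) < a2" using j lt_mult_div by (simp add: mult.assoc)
  show "k0 i j < NN" unfolding k0_def N1 using lt_block[OF jq m] .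
  show km: "k0 i j mod d1 = i mod d1" unfolding k0_def mod_mult_add_dvd[OF chd(2)] by simp
  show "i \<in> Rk (a1,b1,c1,d1) (k0 i j)" unfolding Rk_p div_c1d1 kd km using i ps unfolding PS_def by simp
  show "j \<in> Ck (a2,b2,c2,d2) (k0 i j)" unfolding Ck_q kd using j ps mod_d2[of "k0 i j"] mod_d2[of i] km
    unfolding PS_def by simp
qed

end

context tp begin

lemma carrier_p: "X \<in> factors (a1,b1,c1,d1) \<Longrightarrow> X \<in> carrier_mat (a1*b1*d1) NN"
  unfolding factors_iff by simp
lemma carrier_q: "Y \<in> factors (a2,b2,c2,d2) \<Longrightarrow> Y \<in> carrier_mat NN (a2*c2*d2)"
  unfolding factors_iff NN2 by simp

lemma prod_in_factors:
  assumes X: "X \<in> factors (a1,b1,c1,d1)" and Y: "Y \<in> factors (a2,b2,c2,d2)"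
  shows "X * Y \<in> factors (pstar (a1,b1,c1,d1) (a2,b2,c2,d2))"
  unfolding factors_pstar_iff
proof (intro conjI allI impI)
  have XC: "X \<in> carrier_mat (a1*b1*d1) NN" and YC: "Y \<in> carrier_mat NN (a2*c2*d2)"
    using carrier_p[OF X] carrier_q[OF Y] .
  show "X * Y \<in> carrier_mat (a1*b1*d1) (a2*c2*d2)" using mult_carrier_mat[OF XC YC] .
  fix i j assume i: "i < a1*b1*d1" and j: "j < a2*c2*d2" and nps: "\<not> PS i j"
  have "(X*Y) $$ (i,j) = (\<Sum>k<NN. X $$ (i,k) * Y $$ (k,j))" using mult_entry[OF XC YC i j] .
  also have "\<dots> = 0"
  proof (rule sum.neutral, rule ballI)
    fix k assume "k \<in> {..<NN}"
    then have k: "k < NN" by simp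
    show "X $$ (i,k) * Y $$ (k,j) = 0"
    proof (rule ccontr)
      assume "X $$ (i,k) * Y $$ (k,j) \<noteq> 0"
      then have "X $$ (i,k) \<noteq> 0" "Y $$ (k,j) \<noteq> 0" by auto
      then have "i \<in> Rk (a1,b1,c1,d1) k" "j \<in> Ck (a2,b2,c2,d2) k"
        using fac_p[OF X i k] fac_q[OF Y k j] by blast+
      then have "PS i j" using supp_prod[OF k] by blast
      then show False using nps by blast
    qed
  qed
  finally show "(X*Y) $$ (i,j) = 0" .
qed

lemma Rk_bound: "i \<in> Rk (a1,b1,c1,d1) k \<Longrightarrow> i < a1*b1*d1" unfolding Rk_p by simp
lemma Ck_bound: "j \<in> Ck (a2,b2,c2,d2) k \<Longrightarrow> j < a2*c2*d2" unfolding Ck_q by simp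

lemma key_of_mem:
  assumes "i \<in> Rk (a1,b1,c1,d1) k'" "j \<in> Ck (a2,b2,c2,d2) k'" "i \<in> Rk (a1,b1,c1,d1) k" "j \<in> Ck (a2,b2,c2,d2) k"
  shows "k' div (b2*d2) = k div (b2*d2) \<and> k' mod d1 = k mod d1"
  using assms unfolding Rk_p Ck_q by simp

lemma prod_block:
  assumes X: "X \<in> factors (a1,b1,c1,d1)" and Y: "Y \<in> factors (a2,b2,c2,d2)" and k: "k < NN"
    and i: "i \<in> Rk (a1,b1,c1,d1) k" and j: "j \<in> Ck (a2,b2,c2,d2) k"
  shows "(X*Y) $$ (i,j) = (\<Sum>x<rr. X $$ (i, e k x) * Y $$ (e k x, j))"
proof -
  have XC: "X \<in> carrier_mat (a1*b1*d1) NN" and YC: "Y \<in> carrier_mat NN (a2*c2*d2)"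
    using carrier_p[OF X] carrier_q[OF Y] .
  have ib: "i < a1*b1*d1" using Rk_bound[OF i] .
  have jb: "j < a2*c2*d2" using Ck_bound[OF j] .
  have "(X*Y) $$ (i,j) = (\<Sum>k'<NN. X $$ (i,k') * Y $$ (k',j))" using mult_entry[OF XC YC ib jb] .
  also have "\<dots> = (\<Sum>x<rr. X $$ (i, e k x) * Y $$ (e k x, j))"
  proof (rule class_sum[OF k])
    fix k' assume k': "k' < NN" and nz: "X $$ (i,k') * Y $$ (k',j) \<noteq> 0"
    then have "X $$ (i,k') \<noteq> 0" "Y $$ (k',j) \<noteq> 0" by auto
    then have "i \<in> Rk (a1,b1,c1,d1) k'" "j \<in> Ck (a2,b2,c2,d2) k'"
      using fac_p[OF X ib k'] fac_q[OF Y k' jb] by blast+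
    then show "k' div (b2*d2) = k div (b2*d2) \<and> k' mod d1 = k mod d1"
      using key_of_mem i j by blast
  qed
  finally show ?thesis .
qed

abbreviation "S1 \<equiv> supp_mat (a1,b1,c1,d1)"
abbreviation "S2 \<equiv> supp_mat (a2,b2,c2,d2)"

definition cls :: "nat \<Rightarrow> nat set" where
  "cls k = {j. j < NN \<and> Umat S1 S2 j = Umat S1 S2 k}"

lemma Umat_entry: "i < a1*b1*d1 \<Longrightarrow> j < a2*c2*d2 \<Longrightarrow> Umat S1 S2 k $$ (i,j) = S1 $$ (i,k) * S2 $$ (k,j)"
  unfolding Umat_def by (simp add: supp_mat_dims)

lemma Ppart_eq: "Ppart S1 S2 = cls ` {..<NN}"
  unfolding Ppart_def cls_def supp_mat_dims by auto

lemma RP_cls: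
  assumes k: "k < NN"
  shows "RP S1 S2 (cls k) = Rk (a1,b1,c1,d1) k"
proof (rule equalityI; rule subsetI)
  fix i assume "i \<in> RP S1 S2 (cls k)"
  then obtain k' j where i: "i < a1*b1*d1" and k': "k' \<in> cls k" and j: "j < a2*c2*d2"
    and nz: "Umat S1 S2 k' $$ (i,j) \<noteq> 0"
    unfolding RP_def supp_mat_dims by blast
  have "Umat S1 S2 k' = Umat S1 S2 k" using k' unfolding cls_def by simp
  then have "S1 $$ (i,k) * S2 $$ (k,j) \<noteq> 0" using nz Umat_entry[OF i j] by simp
  then have "S1 $$ (i,k) \<noteq> 0" by auto
  then show "i \<in> Rk (a1,b1,c1,d1) k" using S1_iff[OF i k] by simp
next
  fix i assume iR: "i \<in> Rk (a1,b1,c1,d1) k"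
  have i: "i < a1*b1*d1" using Rk_bound[OF iR] .
  define j where "j = k div (b2*d2) * (c2*d2) + k mod d2"
  have m: "k mod d2 < c2*d2" using pos(7,8)
    by (metis mod_less_divisor less_le_trans mult_le_mono1 Suc_leI mult_Suc mult.commute le_add1)
  have jd: "j div (c2*d2) = k div (b2*d2)" unfolding j_def using div_mult_add_less[OF m] .
  have jm: "j mod d2 = k mod d2" unfolding j_def by (simp add: mod_mult_add_dvd)
  have q: "k div (b2*d2) < a2" using k N1 lt_mult_div by simp
  have jb: "j < a2*c2*d2" unfolding j_def using lt_block[OF q m] by (simp add: mult.assoc)
  have jC: "j \<in> Ck (a2,b2,c2,d2) k" unfolding Ck_q using jb jd jm by simp
  have "S2 $$ (k,j) \<noteq> 0" using S2_iff[OF k jb] jC by simp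
  moreover have "S1 $$ (i,k) \<noteq> 0" using S1_iff[OF i k] iR by simp
  ultimately have "Umat S1 S2 k $$ (i,j) \<noteq> 0" using Umat_entry[OF i jb] by simp
  moreover have "k \<in> cls k" unfolding cls_def using k by simp
  ultimately show "i \<in> RP S1 S2 (cls k)" unfolding RP_def supp_mat_dims using i jb by blast
qed

lemma CP_cls:
  assumes k: "k < NN"
  shows "CP S1 S2 (cls k) = Ck (a2,b2,c2,d2) k"
proof (rule equalityI; rule subsetI)
  fix j assume "j \<in> CP S1 S2 (cls k)"
  then obtain k' i where j: "j < a2*c2*d2" and k': "k' \<in> cls k" and i: "i < a1*b1*d1"
    and nz: "Umat S1 S2 k' $$ (i,j) \<noteq> 0"
    unfolding CP_def supp_mat_dims by blast
  have "Umat S1 S2 k' = Umat S1 S2 k" using k' unfolding cls_def by simp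
  then have "S1 $$ (i,k) * S2 $$ (k,j) \<noteq> 0" using nz Umat_entry[OF i j] by simp
  then have "S2 $$ (k,j) \<noteq> 0" by auto
  then show "j \<in> Ck (a2,b2,c2,d2) k" using S2_iff[OF k j] by simp
next
  fix j assume jC: "j \<in> Ck (a2,b2,c2,d2) k"
  have j: "j < a2*c2*d2" using Ck_bound[OF jC] .
  define i where "i = k div (c1*d1) * (b1*d1) + k mod d1"
  have m: "k mod d1 < b1*d1" using pos(2,4)
    by (metis mod_less_divisor less_le_trans mult_le_mono1 Suc_leI mult_Suc mult.commute le_add1)
  have id: "i div (b1*d1) = k div (c1*d1)" unfolding i_def using div_mult_add_less[OF m] .
  have im: "i mod d1 = k mod d1" unfolding i_def by (simp add: mod_mult_add_dvd)
  have q: "k div (c1*d1) < a1" using k lt_mult_div by (simp add: mult.assoc)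
  have ib: "i < a1*b1*d1" unfolding i_def using lt_block[OF q m] by (simp add: mult.assoc)
  have iR: "i \<in> Rk (a1,b1,c1,d1) k" unfolding Rk_p using ib id im by simp
  have "S2 $$ (k,j) \<noteq> 0" using S2_iff[OF k j] jC by simp
  moreover have "S1 $$ (i,k) \<noteq> 0" using S1_iff[OF ib k] iR by simp
  ultimately have "Umat S1 S2 k $$ (i,j) \<noteq> 0" using Umat_entry[OF ib j] by simp
  moreover have "k \<in> cls k" unfolding cls_def using k by simp
  ultimately show "j \<in> CP S1 S2 (cls k)" unfolding CP_def supp_mat_dims using ib j by blast
qed

lemma M_iff: "A \<in> Mset ((a1,b1,c1,d1), (a2,b2,c2,d2)) \<longleftrightarrow> A \<in> carrier_mat (a1*b1*d1) (a2*c2*d2) \<and>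
   (\<forall>k<NN. vec_space.rank (dim_row (submatrix A (Rk (a1,b1,c1,d1) k) (Ck (a2,b2,c2,d2) k)))
       (submatrix A (Rk (a1,b1,c1,d1) k) (Ck (a2,b2,c2,d2) k)) \<le> rr)"
proof -
  have cr: "chain_r (a1,b1,c1,d1) (a2,b2,c2,d2) = rr" unfolding chain_r_def by simp
  have "(\<forall>P\<in>Ppart S1 S2. vec_space.rank (dim_row (submatrix A (RP S1 S2 P) (CP S1 S2 P)))
       (submatrix A (RP S1 S2 P) (CP S1 S2 P)) \<le> rr) \<longleftrightarrow>
     (\<forall>k<NN. vec_space.rank (dim_row (submatrix A (Rk (a1,b1,c1,d1) k) (Ck (a2,b2,c2,d2) k)))
       (submatrix A (Rk (a1,b1,c1,d1) k) (Ck (a2,b2,c2,d2) k)) \<le> rr)"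
    unfolding Ppart_eq using RP_cls CP_cls by auto
  then show ?thesis unfolding Mset_def pat_rows_def pat_cols_def Let_def by (simp add: cr)
qed

end

lemma len2: assumes "length xs = 2" shows "xs = [xs!0, xs!1]"
proof -
  obtain a t where 1: "xs = a # t" using assms by (cases xs) auto
  then obtain b t' where 2: "t = b # t'" using assms by (cases t) auto
  then have "t' = []" using assms 1 by simp
  then show ?thesis using 1 2 by simp
qed

context tp begin

lemma constr:
  assumes A: "A \<in> factors (pstar (a1,b1,c1,d1) (a2,b2,c2,d2))"
    and rk: "\<forall>k<NN. vec_space.rank (dim_row (submatrix A (Rk (a1,b1,c1,d1) k) (Ck (a2,b2,c2,d2) k)))
       (submatrix A (Rk (a1,b1,c1,d1) k) (Ck (a2,b2,c2,d2) k)) \<le> rr"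
  shows "\<exists>X Y W. X \<in> factors (a1,b1,c1,d1) \<and> Y \<in> factors (a2,b2,c2,d2) \<and> A = X * Y \<and>
     (\<forall>i<a1*b1*d1. \<forall>k<NN. X $$ (i,k) = (if i \<in> Rk (a1,b1,c1,d1) k
        then (\<Sum>j'\<in>Ck (a2,b2,c2,d2) k. A $$ (i,j') * W k j') else 0))"
proof -
  let ?R = "Rk (a1,b1,c1,d1)" and ?C = "Ck (a2,b2,c2,d2)"
  have AC: "A \<in> carrier_mat (a1*b1*d1) (a2*c2*d2)" using A unfolding factors_pstar_iff by blast
  have dA: "dim_row A = a1*b1*d1" "dim_col A = a2*c2*d2" using AC by auto
  define P where "P R C w g \<longleftrightarrow> (\<forall>i\<in>R. \<forall>j\<in>C. i < a1*b1*d1 \<longrightarrow> j < a2*c2*d2 \<longrightarrow>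
     A $$ (i,j) = (\<Sum>x<rr. (\<Sum>j'\<in>{j'. j' < a2*c2*d2 \<and> j' \<in> C}. A $$ (i,j') * w j' x) * g x j))"
    for R C and w :: "nat \<Rightarrow> nat \<Rightarrow> complex" and g :: "nat \<Rightarrow> nat \<Rightarrow> complex"
  define WG where "WG R C = (SOME wg. P R C (fst wg) (snd wg))" for R C
  define wk where "wk k = fst (WG (?R k) (?C k))" for k
  define gk where "gk k = snd (WG (?R k) (?C k))" for k
  have spec: "P (?R k) (?C k) (wk k) (gk k)" if k: "k < NN" for k
  proof -
    have "\<exists>w g. P (?R k) (?C k) w g"
      using rank_fact[of A "?R k" "?C k" rr] rk k unfolding P_def dA by blast
    then have "\<exists>wg. P (?R k) (?C k) (fst wg) (snd wg)" by simp
    then have "P (?R k) (?C k) (fst (WG (?R k) (?C k))) (snd (WG (?R k) (?C k)))"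
      unfolding WG_def by (rule someI_ex)
    then show ?thesis unfolding wk_def gk_def .
  qed
  have Cset: "{j'. j' < a2*c2*d2 \<and> j' \<in> ?C k} = ?C k" for k using Ck_bound by blast
  define xk where "xk k = (k div d1) mod rr" for k
  define X where "X = mat (a1*b1*d1) NN (\<lambda>(i,k). if i \<in> ?R k then (\<Sum>j'\<in>?C k. A $$ (i,j') * wk k j' (xk k)) else 0)"
  define Y where "Y = mat NN (a2*c2*d2) (\<lambda>(k,j). if j \<in> ?C k then gk k (xk k) j else 0)"
  have XC: "X \<in> carrier_mat (a1*b1*d1) NN" unfolding X_def by simp
  have YC: "Y \<in> carrier_mat NN (a2*c2*d2)" unfolding Y_def by simp
  have Xe: "X $$ (i,k) = (if i \<in> ?R k then (\<Sum>j'\<in>?C k. A $$ (i,j') * wk k j' (xk k)) else 0)"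
    if "i < a1*b1*d1" "k < NN" for i k unfolding X_def using that by simp
  have Ye: "Y $$ (k,j) = (if j \<in> ?C k then gk k (xk k) j else 0)"
    if "k < NN" "j < a2*c2*d2" for k j unfolding Y_def using that by simp
  have Xf: "X \<in> factors (a1,b1,c1,d1)" unfolding factors_iff
  proof (intro conjI allI impI)
    show "X \<in> carrier_mat (a1*b1*d1) (a1*c1*d1)" using XC .
    fix i k assume i: "i < a1*b1*d1" and k: "k < a1*c1*d1" and nc: "\<not> (i div (b1*d1) = k div (c1*d1) \<and> i mod d1 = k mod d1)"
    then have "i \<notin> ?R k" unfolding Rk_p by blast
    then show "X $$ (i,k) = 0" using Xe[OF i k] by simp
  qed
  have Yf: "Y \<in> factors (a2,b2,c2,d2)" unfolding factors_iff
  proof (intro conjI allI impI)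
    show "Y \<in> carrier_mat (a2*b2*d2) (a2*c2*d2)" using YC NN2 by simp
    fix k j assume k: "k < a2*b2*d2" and j: "j < a2*c2*d2" and nc: "\<not> (k div (b2*d2) = j div (c2*d2) \<and> k mod d2 = j mod d2)"
    then have "j \<notin> ?C k" unfolding Ck_q by auto
    moreover have "k < NN" using k NN2 by simp
    ultimately show "Y $$ (k,j) = 0" using Ye[OF _ j] by simp
  qed
  have AXY: "A = X * Y"
  proof (rule eq_matI)
    show "dim_row A = dim_row (X*Y)" using dA XC by simp
    show "dim_col A = dim_col (X*Y)" using dA YC by simp
    fix i j assume "i < dim_row (X*Y)" "j < dim_col (X*Y)"
    then have i: "i < a1*b1*d1" and j: "j < a2*c2*d2" using XC YC by auto
    show "A $$ (i,j) = (X*Y) $$ (i,j)"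
    proof (cases "PS i j")
      case False
      have "X*Y \<in> factors (pstar (a1,b1,c1,d1) (a2,b2,c2,d2))" using prod_in_factors[OF Xf Yf] .
      then have "(X*Y) $$ (i,j) = 0" using i j False unfolding factors_pstar_iff by blast
      moreover have "A $$ (i,j) = 0" using A i j False unfolding factors_pstar_iff by blast
      ultimately show ?thesis by simp
    next
      case True
      let ?k = "k0 i j"
      have k: "?k < NN" and iR: "i \<in> ?R ?k" and jC: "j \<in> ?C ?k" using supp_cover[OF i j True] by blast+
      have "(X*Y) $$ (i,j) = (\<Sum>x<rr. X $$ (i, e ?k x) * Y $$ (e ?k x, j))"
        using prod_block[OF Xf Yf k iR jC] .
      also have "\<dots> = (\<Sum>x<rr. (\<Sum>j'\<in>?C ?k. A $$ (i,j') * wk ?k j' x) * gk ?k x j)"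
      proof (rule sum.cong[OF refl])
        fix x assume "x \<in> {..<rr}"
        then have x: "x < rr" by simp
        have ek: "e ?k x < NN" using e_props(1)[OF k x] .
        have RR: "?R (e ?k x) = ?R ?k" using key_R[OF e_props(2)[OF k x] e_props(3)[OF k x]] .
        have CC: "?C (e ?k x) = ?C ?k" using key_C[OF e_props(2)[OF k x] e_props(3)[OF k x]] .
        have xx: "xk (e ?k x) = x" unfolding xk_def using e_props(4)[OF k x] .
        have ww: "wk (e ?k x) = wk ?k" unfolding wk_def RR CC ..
        have gg: "gk (e ?k x) = gk ?k" unfolding gk_def RR CC ..
        show "X $$ (i, e ?k x) * Y $$ (e ?k x, j) = (\<Sum>j'\<in>?C ?k. A $$ (i,j') * wk ?k j' x) * gk ?k x j"
          unfolding Xe[OF i ek] Ye[OF ek j] RR CC xx ww gg using iR jC by simp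
      qed
      also have "\<dots> = A $$ (i,j)" using spec[OF k] iR jC i j unfolding P_def Cset by simp
      finally show ?thesis by simp
    qed
  qed
  have main: "\<forall>i<a1*b1*d1. \<forall>k<NN. X $$ (i,k) = (if i \<in> ?R k
        then (\<Sum>j'\<in>?C k. A $$ (i,j') * wk k j' (xk k)) else 0)"
    by (intro allI impI) (rule Xe)
  show ?thesis
    apply (rule exI[of _ X], rule exI[of _ Y], rule exI[of _ "\<lambda>k j'. wk k j' (xk k)"])
    apply (intro conjI)
    apply (rule Xf)
    apply (rule Yf)
    apply (rule AXY)
    apply (rule main)
    done
qed

lemma B2:
  "Bset [(a1,b1,c1,d1), (a2,b2,c2,d2)] = factors (pstar (a1,b1,c1,d1) (a2,b2,c2,d2)) \<inter> Mset ((a1,b1,c1,d1), (a2,b2,c2,d2))"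
proof (rule equalityI; rule subsetI)
  fix A assume "A \<in> Bset [(a1,b1,c1,d1), (a2,b2,c2,d2)]"
  then obtain Xs where AX: "A = mprod Xs" and L: "length Xs = length [(a1,b1,c1,d1), (a2,b2,c2,d2)]"
    and F: "\<forall>l<length [(a1,b1,c1,d1), (a2,b2,c2,d2)]. Xs ! l \<in> factors ([(a1,b1,c1,d1), (a2,b2,c2,d2)] ! l)"
    unfolding Bset_def by blast
  have Xs1: "length Xs = 2" using L by simp
  have Xs2: "Xs ! 0 \<in> factors (a1,b1,c1,d1)" using F[rule_format, of 0] by simp
  have Xs3: "Xs ! 1 \<in> factors (a2,b2,c2,d2)" using F[rule_format, of 1] by simp
  note Xs = Xs1 Xs2 Xs3
  have XX: "Xs = [Xs ! 0, Xs ! 1]" using len2[OF Xs(1)] .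
  have "mprod Xs = mprod [Xs ! 0, Xs ! 1]" by (rule arg_cong[OF XX])
  also have "\<dots> = Xs ! 0 * Xs ! 1" by (simp only: mprod.simps)
  finally have A: "A = Xs ! 0 * Xs ! 1" using AX by simp
  have Af: "A \<in> factors (pstar (a1,b1,c1,d1) (a2,b2,c2,d2))" unfolding A using prod_in_factors[OF Xs(2,3)] .
  have AC: "A \<in> carrier_mat (a1*b1*d1) (a2*c2*d2)" using Af unfolding factors_pstar_iff by blast
  have "A \<in> Mset ((a1,b1,c1,d1), (a2,b2,c2,d2))" unfolding M_iff
  proof (intro conjI allI impI)
    show "A \<in> carrier_mat (a1*b1*d1) (a2*c2*d2)" using AC .
    fix k assume k: "k < NN"
    show "vec_space.rank (dim_row (submatrix A (Rk (a1,b1,c1,d1) k) (Ck (a2,b2,c2,d2) k)))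
       (submatrix A (Rk (a1,b1,c1,d1) k) (Ck (a2,b2,c2,d2) k)) \<le> rr"
    proof (rule rank_le_of_frank)
      show "\<forall>i\<in>Rk (a1,b1,c1,d1) k. \<forall>j\<in>Ck (a2,b2,c2,d2) k. i < dim_row A \<longrightarrow> j < dim_col A \<longrightarrow>
         A $$ (i,j) = (\<Sum>x<rr. (Xs ! 0) $$ (i, e k x) * (Xs ! 1) $$ (e k x, j))"
        unfolding A using prod_block[OF Xs(2,3) k] by (intro ballI impI)
    qed
  qed
  then show "A \<in> factors (pstar (a1,b1,c1,d1) (a2,b2,c2,d2)) \<inter> Mset ((a1,b1,c1,d1), (a2,b2,c2,d2))"
    using Af by blast
next
  fix A assume A: "A \<in> factors (pstar (a1,b1,c1,d1) (a2,b2,c2,d2)) \<inter> Mset ((a1,b1,c1,d1), (a2,b2,c2,d2))"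
  have AM: "A \<in> Mset ((a1,b1,c1,d1), (a2,b2,c2,d2))" using A by (rule IntD2)
  have rk: "\<forall>k<NN. vec_space.rank (dim_row (submatrix A (Rk (a1,b1,c1,d1) k) (Ck (a2,b2,c2,d2) k)))
       (submatrix A (Rk (a1,b1,c1,d1) k) (Ck (a2,b2,c2,d2) k)) \<le> rr" using AM[unfolded M_iff] by (rule conjunct2)
  obtain X Y where X: "X \<in> factors (a1,b1,c1,d1)" and Y: "Y \<in> factors (a2,b2,c2,d2)" and AXY: "A = X * Y"
    using constr[OF _ rk] A by blast
  have 1: "A = mprod [X, Y]" using AXY by (simp only: mprod.simps)
  have 2: "\<forall>l<length [(a1,b1,c1,d1), (a2,b2,c2,d2)]. [X,Y] ! l \<in> factors ([(a1,b1,c1,d1), (a2,b2,c2,d2)] ! l)"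
  proof (intro allI impI)
    fix l assume "l < length [(a1,b1,c1,d1), (a2,b2,c2,d2)]"
    then have "l = 0 \<or> l = 1" by auto
    then show "[X,Y] ! l \<in> factors ([(a1,b1,c1,d1), (a2,b2,c2,d2)] ! l)" using X Y by auto
  qed
  have "\<exists>Xs. A = mprod Xs \<and> length Xs = length [(a1,b1,c1,d1), (a2,b2,c2,d2)] \<and>
     (\<forall>l<length [(a1,b1,c1,d1), (a2,b2,c2,d2)]. Xs ! l \<in> factors ([(a1,b1,c1,d1), (a2,b2,c2,d2)] ! l))"
    using 1 2 by (intro exI[of _ "[X,Y]"] conjI) simp_all
  then show "A \<in> Bset [(a1,b1,c1,d1), (a2,b2,c2,d2)]" unfolding Bset_def by (simp only: mem_Collect_eq)
qed

end

definition aa :: "pattern list \<Rightarrow> nat \<Rightarrow> nat" where "aa \<beta> i = fst (\<beta>!i)"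
definition bb :: "pattern list \<Rightarrow> nat \<Rightarrow> nat" where "bb \<beta> i = fst (snd (\<beta>!i))"
definition cc :: "pattern list \<Rightarrow> nat \<Rightarrow> nat" where "cc \<beta> i = fst (snd (snd (\<beta>!i)))"
definition dd :: "pattern list \<Rightarrow> nat \<Rightarrow> nat" where "dd \<beta> i = snd (snd (snd (\<beta>!i)))"

lemma nth_tuple: "\<beta>!i = (aa \<beta> i, bb \<beta> i, cc \<beta> i, dd \<beta> i)"
  unfolding aa_def bb_def cc_def dd_def by simp

lemma arch_pos:
  assumes "chainable_arch \<beta>" "i < length \<beta>"
  shows "0 < aa \<beta> i" "0 < bb \<beta> i" "0 < cc \<beta> i" "0 < dd \<beta> i"
proof -
  have "pattern_ok (\<beta>!i)" using assms unfolding chainable_arch_def architecture_def by simp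
  then show "0 < aa \<beta> i" "0 < bb \<beta> i" "0 < cc \<beta> i" "0 < dd \<beta> i"
    unfolding nth_tuple[of \<beta> i] pattern_ok_def by simp_all
qed

lemma arch_step:
  assumes "chainable_arch \<beta>" "Suc l < length \<beta>"
  shows "aa \<beta> (Suc l) dvd aa \<beta> l * cc \<beta> l" "dd \<beta> l dvd bb \<beta> (Suc l) * dd \<beta> (Suc l)"
    "aa \<beta> l * cc \<beta> l div aa \<beta> (Suc l) = bb \<beta> (Suc l) * dd \<beta> (Suc l) div dd \<beta> l"
    "aa \<beta> l dvd aa \<beta> (Suc l)" "dd \<beta> (Suc l) dvd dd \<beta> l"
    "aa \<beta> l * cc \<beta> l * dd \<beta> l = aa \<beta> (Suc l) * bb \<beta> (Suc l) * dd \<beta> (Suc l)"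
proof -
  have c: "chainable (\<beta>!l) (\<beta>!Suc l)" using assms unfolding chainable_arch_def by simp
  have a: "pat_cols (\<beta>!l) = pat_rows (\<beta>!Suc l)" using assms unfolding chainable_arch_def architecture_def by simp
  show "aa \<beta> (Suc l) dvd aa \<beta> l * cc \<beta> l" "dd \<beta> l dvd bb \<beta> (Suc l) * dd \<beta> (Suc l)"
    "aa \<beta> l * cc \<beta> l div aa \<beta> (Suc l) = bb \<beta> (Suc l) * dd \<beta> (Suc l) div dd \<beta> l"
    "aa \<beta> l dvd aa \<beta> (Suc l)" "dd \<beta> (Suc l) dvd dd \<beta> l"
    using c unfolding nth_tuple[of \<beta> l] nth_tuple[of \<beta> "Suc l"] chainable_def by simp_all
  show "aa \<beta> l * cc \<beta> l * dd \<beta> l = aa \<beta> (Suc l) * bb \<beta> (Suc l) * dd \<beta> (Suc l)"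
    using a unfolding nth_tuple[of \<beta> l] nth_tuple[of \<beta> "Suc l"] pat_cols_def pat_rows_def by simp
qed

lemma arch_dvd:
  assumes "chainable_arch \<beta>" "i \<le> j" "j < length \<beta>"
  shows "aa \<beta> i dvd aa \<beta> j" "dd \<beta> j dvd dd \<beta> i"
proof -
  have "j < length \<beta> \<longrightarrow> aa \<beta> i dvd aa \<beta> j \<and> dd \<beta> j dvd dd \<beta> i" using assms(2)
  proof (induction j rule: dec_induct)
    case base then show ?case by simp
  next
    case (step n)
    show ?case
    proof
      assume n: "Suc n < length \<beta>"
      then have "aa \<beta> i dvd aa \<beta> n" "dd \<beta> n dvd dd \<beta> i" using step by simp_all
      then show "aa \<beta> i dvd aa \<beta> (Suc n) \<and> dd \<beta> (Suc n) dvd dd \<beta> i"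
        using arch_step(4,5)[OF assms(1) n] dvd_trans by blast
    qed
  qed
  then show "aa \<beta> i dvd aa \<beta> j" "dd \<beta> j dvd dd \<beta> i" using assms(3) by simp_all
qed

lemma pstar_list_single: "pstar_list [x] = x" unfolding pstar_list_def by simp

lemma pstar_list_snoc: "xs \<noteq> [] \<Longrightarrow> pstar_list (xs @ [x]) = pstar (pstar_list xs) x"
  unfolding pstar_list_def by (cases xs) simp_all

lemma div_pos_dvd: "0 < (x::nat) \<Longrightarrow> d dvd x \<Longrightarrow> 0 < x div d"
  by (metis dvd_div_mult_self gr0I mult_is_0 neq0_conv)

lemma closed_take:
  assumes ch: "chainable_arch \<beta>" and n: "0 < n" "n \<le> length \<beta>"
  shows "pstar_list (take n \<beta>) = (aa \<beta> 0, bb \<beta> 0 * dd \<beta> 0 div dd \<beta> (n-1), aa \<beta> (n-1) * cc \<beta> (n-1) div aa \<beta> 0, dd \<beta> (n-1))"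
  using n
proof (induction n)
  case 0 then show ?case by simp
next
  case (Suc n)
  have L: "0 < length \<beta>" using Suc.prems by linarith
  show ?case
  proof (cases n)
    case 0
    have t: "take (Suc 0) \<beta> = [\<beta>!0]" using L by (simp add: take_Suc_conv_app_nth)
    have "bb \<beta> 0 * dd \<beta> 0 div dd \<beta> 0 = bb \<beta> 0" using arch_pos[OF ch L] by simp
    moreover have "aa \<beta> 0 * cc \<beta> 0 div aa \<beta> 0 = cc \<beta> 0" using arch_pos[OF ch L] by simp
    ultimately show ?thesis unfolding 0 t pstar_list_single using nth_tuple[of \<beta> 0] by simp
  next
    case (Suc n')
    have nl: "n < length \<beta>" using Suc.prems by simp
    have np: "0 < n" using Suc by simp
    have IH: "pstar_list (take n \<beta>) = (aa \<beta> 0, bb \<beta> 0 * dd \<beta> 0 div dd \<beta> (n-1), aa \<beta> (n-1) * cc \<beta> (n-1) div aa \<beta> 0, dd \<beta> (n-1))"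
      using Suc.IH np nl by simp
    have t: "take (Suc n) \<beta> = take n \<beta> @ [\<beta>!n]" using nl by (simp add: take_Suc_conv_app_nth)
    have bne: "\<beta> \<noteq> []" using nl by (cases \<beta>) simp_all
    have ne: "take n \<beta> \<noteq> []" using np bne by simp
    have sn: "Suc (n-1) = n" using np by simp
    have d1: "dd \<beta> (n-1) dvd dd \<beta> 0" using arch_dvd(2)[OF ch _, of 0 "n-1"] nl by simp
    have d2: "dd \<beta> (n-1) dvd bb \<beta> 0 * dd \<beta> 0" using d1 by simp
    have "(bb \<beta> 0 * dd \<beta> 0 div dd \<beta> (n-1)) * dd \<beta> (n-1) = bb \<beta> 0 * dd \<beta> 0" using d2 by simp
    then show ?thesis unfolding t pstar_list_snoc[OF ne] IH nth_tuple[of \<beta> n] pstar_def by simp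
  qed
qed

lemma closed:
  assumes ch: "chainable_arch \<beta>"
  shows "pstar_list \<beta> = (aa \<beta> 0, bb \<beta> 0 * dd \<beta> 0 div dd \<beta> (length \<beta> - 1), aa \<beta> (length \<beta> - 1) * cc \<beta> (length \<beta> - 1) div aa \<beta> 0, dd \<beta> (length \<beta> - 1))"
proof -
  have "\<beta> \<noteq> []" using ch unfolding chainable_arch_def architecture_def by simp
  then show ?thesis using closed_take[OF ch, of "length \<beta>"] by simp
qed

lemma chain_take:
  assumes ch: "chainable_arch \<beta>" and l: "0 < l"
  shows "chainable_arch (take l \<beta>)"
  using ch l unfolding chainable_arch_def architecture_def
  by (auto simp: nth_take dest: in_set_takeD)

lemma chain_drop:
  assumes ch: "chainable_arch \<beta>" and l: "l < length \<beta>"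
  shows "chainable_arch (drop l \<beta>)"
  using ch l unfolding chainable_arch_def architecture_def
  by (auto simp: nth_drop dest: in_set_dropD)

lemma aa_take: "i < l \<Longrightarrow> aa (take l \<beta>) i = aa \<beta> i" "i < l \<Longrightarrow> bb (take l \<beta>) i = bb \<beta> i"
  "i < l \<Longrightarrow> cc (take l \<beta>) i = cc \<beta> i" "i < l \<Longrightarrow> dd (take l \<beta>) i = dd \<beta> i"
  unfolding aa_def bb_def cc_def dd_def by simp_all

lemma aa_drop: "l \<le> length \<beta> \<Longrightarrow> aa (drop l \<beta>) i = aa \<beta> (l+i)" "l \<le> length \<beta> \<Longrightarrow> bb (drop l \<beta>) i = bb \<beta> (l+i)"
  "l \<le> length \<beta> \<Longrightarrow> cc (drop l \<beta>) i = cc \<beta> (l+i)" "l \<le> length \<beta> \<Longrightarrow> dd (drop l \<beta>) i = dd \<beta> (l+i)"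
  unfolding aa_def bb_def cc_def dd_def by simp_all

lemma split_tp:
  assumes ch: "chainable_arch \<beta>" and l: "1 \<le> l" "l < length \<beta>"
  shows "pstar_list (take l \<beta>) = (aa \<beta> 0, bb \<beta> 0 * dd \<beta> 0 div dd \<beta> (l-1), aa \<beta> (l-1) * cc \<beta> (l-1) div aa \<beta> 0, dd \<beta> (l-1))"
    "pstar_list (drop l \<beta>) = (aa \<beta> l, bb \<beta> l * dd \<beta> l div dd \<beta> (length \<beta> - 1), aa \<beta> (length \<beta> - 1) * cc \<beta> (length \<beta> - 1) div aa \<beta> l, dd \<beta> (length \<beta> - 1))"
    "tp (aa \<beta> 0) (bb \<beta> 0 * dd \<beta> 0 div dd \<beta> (l-1)) (aa \<beta> (l-1) * cc \<beta> (l-1) div aa \<beta> 0) (dd \<beta> (l-1))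
        (aa \<beta> l) (bb \<beta> l * dd \<beta> l div dd \<beta> (length \<beta> - 1)) (aa \<beta> (length \<beta> - 1) * cc \<beta> (length \<beta> - 1) div aa \<beta> l) (dd \<beta> (length \<beta> - 1))"
    "pstar (aa \<beta> 0, bb \<beta> 0 * dd \<beta> 0 div dd \<beta> (l-1), aa \<beta> (l-1) * cc \<beta> (l-1) div aa \<beta> 0, dd \<beta> (l-1))
       (aa \<beta> l, bb \<beta> l * dd \<beta> l div dd \<beta> (length \<beta> - 1), aa \<beta> (length \<beta> - 1) * cc \<beta> (length \<beta> - 1) div aa \<beta> l, dd \<beta> (length \<beta> - 1))
     = pstar_list \<beta>"
proof -
  define u where "u = l - 1"
  define m where "m = length \<beta> - 1"
  have ul: "Suc u = l" using l unfolding u_def by simp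
  have um: "u \<le> m" "l \<le> m" "m < length \<beta>" "u < length \<beta>" using l unfolding u_def m_def by simp_all
  show "pstar_list (take l \<beta>) = (aa \<beta> 0, bb \<beta> 0 * dd \<beta> 0 div dd \<beta> (l-1), aa \<beta> (l-1) * cc \<beta> (l-1) div aa \<beta> 0, dd \<beta> (l-1))"
    using closed_take[OF ch, of l] l by simp
  have chd: "chainable_arch (drop l \<beta>)" using chain_drop[OF ch l(2)] .
  have ld: "length (drop l \<beta>) - 1 = m - l" unfolding m_def by simp
  have lm: "l + (m - l) = m" using um by simp
  show "pstar_list (drop l \<beta>) = (aa \<beta> l, bb \<beta> l * dd \<beta> l div dd \<beta> (length \<beta> - 1), aa \<beta> (length \<beta> - 1) * cc \<beta> (length \<beta> - 1) div aa \<beta> l, dd \<beta> (length \<beta> - 1))"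
    unfolding closed[OF chd] ld aa_drop[OF less_imp_le[OF l(2)]] lm m_def[symmetric] by simp
  have L0: "0 < length \<beta>" using um(3) by linarith
  have pos: "0 < aa \<beta> 0" "0 < aa \<beta> l" "0 < dd \<beta> u" "0 < dd \<beta> m" "0 < bb \<beta> 0 * dd \<beta> 0"
     "0 < bb \<beta> l * dd \<beta> l" "0 < aa \<beta> u * cc \<beta> u" "0 < aa \<beta> m * cc \<beta> m"
    using arch_pos[OF ch L0] arch_pos[OF ch l(2)] arch_pos[OF ch um(4)] arch_pos[OF ch um(3)] by simp_all
  have dv: "aa \<beta> 0 dvd aa \<beta> u" "aa \<beta> 0 dvd aa \<beta> l" "aa \<beta> l dvd aa \<beta> m" "dd \<beta> u dvd dd \<beta> 0" "dd \<beta> m dvd dd \<beta> l" "dd \<beta> m dvd dd \<beta> u"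
    using arch_dvd[OF ch] um by simp_all
  have dv2: "aa \<beta> 0 dvd aa \<beta> u * cc \<beta> u" "aa \<beta> l dvd aa \<beta> m * cc \<beta> m" "dd \<beta> u dvd bb \<beta> 0 * dd \<beta> 0" "dd \<beta> m dvd bb \<beta> l * dd \<beta> l"
    using dv by simp_all
  have R1: "aa \<beta> 0 * (aa \<beta> u * cc \<beta> u div aa \<beta> 0) = aa \<beta> u * cc \<beta> u" using dv2(1) by simp
  have R2: "(bb \<beta> l * dd \<beta> l div dd \<beta> m) * dd \<beta> m = bb \<beta> l * dd \<beta> l" using dv2(4) by simp
  have R3: "(bb \<beta> 0 * dd \<beta> 0 div dd \<beta> u) * dd \<beta> u = bb \<beta> 0 * dd \<beta> 0" using dv2(3) by simp
  have R4: "aa \<beta> l * (aa \<beta> m * cc \<beta> m div aa \<beta> l) = aa \<beta> m * cc \<beta> m" using dv2(2) by simp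
  have st: "aa \<beta> l dvd aa \<beta> u * cc \<beta> u" "dd \<beta> u dvd bb \<beta> l * dd \<beta> l"
    "aa \<beta> u * cc \<beta> u div aa \<beta> l = bb \<beta> l * dd \<beta> l div dd \<beta> u"
    "aa \<beta> u * cc \<beta> u * dd \<beta> u = aa \<beta> l * bb \<beta> l * dd \<beta> l"
    using arch_step[OF ch, of u] um ul by simp_all
  show "tp (aa \<beta> 0) (bb \<beta> 0 * dd \<beta> 0 div dd \<beta> (l-1)) (aa \<beta> (l-1) * cc \<beta> (l-1) div aa \<beta> 0) (dd \<beta> (l-1))
        (aa \<beta> l) (bb \<beta> l * dd \<beta> l div dd \<beta> (length \<beta> - 1)) (aa \<beta> (length \<beta> - 1) * cc \<beta> (length \<beta> - 1) div aa \<beta> l) (dd \<beta> (length \<beta> - 1))"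
    unfolding u_def[symmetric] m_def[symmetric]
  proof (unfold_locales)
    show "0 < aa \<beta> 0" "0 < aa \<beta> l" "0 < dd \<beta> u" "0 < dd \<beta> m" using pos by simp_all
    show "0 < bb \<beta> 0 * dd \<beta> 0 div dd \<beta> u" using div_pos_dvd[OF pos(5) dv2(3)] .
    show "0 < aa \<beta> u * cc \<beta> u div aa \<beta> 0" using div_pos_dvd[OF pos(7) dv2(1)] .
    show "0 < bb \<beta> l * dd \<beta> l div dd \<beta> m" using div_pos_dvd[OF pos(6) dv2(4)] .
    show "0 < aa \<beta> m * cc \<beta> m div aa \<beta> l" using div_pos_dvd[OF pos(8) dv2(2)] .
    show "chainable (aa \<beta> 0, bb \<beta> 0 * dd \<beta> 0 div dd \<beta> u, aa \<beta> u * cc \<beta> u div aa \<beta> 0, dd \<beta> u)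
      (aa \<beta> l, bb \<beta> l * dd \<beta> l div dd \<beta> m, aa \<beta> m * cc \<beta> m div aa \<beta> l, dd \<beta> m)"
      unfolding chainable_def using R1 R2 st dv by simp
    show "aa \<beta> 0 * (aa \<beta> u * cc \<beta> u div aa \<beta> 0) * dd \<beta> u = aa \<beta> l * (bb \<beta> l * dd \<beta> l div dd \<beta> m) * dd \<beta> m"
      unfolding R1 mult.assoc[of "aa \<beta> l"] R2 using st(4) by (simp add: mult.assoc)
  qed
  show "pstar (aa \<beta> 0, bb \<beta> 0 * dd \<beta> 0 div dd \<beta> (l-1), aa \<beta> (l-1) * cc \<beta> (l-1) div aa \<beta> 0, dd \<beta> (l-1))
       (aa \<beta> l, bb \<beta> l * dd \<beta> l div dd \<beta> (length \<beta> - 1), aa \<beta> (length \<beta> - 1) * cc \<beta> (length \<beta> - 1) div aa \<beta> l, dd \<beta> (length \<beta> - 1))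
     = pstar_list \<beta>"
    unfolding u_def[symmetric] m_def[symmetric] closed[OF ch] pstar_def using R3 R4 by simp
qed

lemma Rk_norm:
  assumes "0 < a" "0 < d" "d dvd X" "a dvd Y"
  shows "Rk (a, X div d, Y div a, d) k = {i. i < a*X \<and> i div X = k div (Y*d div a) \<and> i mod d = k mod d}"
proof -
  have 1: "(X div d) * d = X" using assms by simp
  have 2: "a * (X div d) * d = a*X" using 1 by (simp add: mult.assoc)
  have 3: "(Y div a) * d = Y*d div a" using assms(4) by (metis div_mult_swap mult.commute)
  have "Rk (a, X div d, Y div a, d) k = {i. i < a*(X div d)*d \<and> i div ((X div d)*d) = k div ((Y div a)*d) \<and> i mod d = k mod d}"
    unfolding Rk_def by simp
  also have "\<dots> = {i. i < a*X \<and> i div X = k div (Y*d div a) \<and> i mod d = k mod d}" unfolding 2 1 3 ..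
  finally show ?thesis .
qed

lemma Ck_norm:
  assumes "0 < a" "0 < d" "d dvd X" "a dvd Y"
  shows "Ck (a, X div d, Y div a, d) k = {j. j < Y*d \<and> j div (Y*d div a) = k div X \<and> j mod d = k mod d}"
proof -
  have 1: "(X div d) * d = X" using assms by simp
  have 2: "a * (Y div a) * d = Y*d" using assms(4) by simp
  have 3: "(Y div a) * d = Y*d div a" using assms(4) by (metis div_mult_swap mult.commute)
  have "Ck (a, X div d, Y div a, d) k = {j. j < a*(Y div a)*d \<and> j div ((Y div a)*d) = k div ((X div d)*d) \<and> j mod d = k mod d}"
    unfolding Ck_def by simp
  also have "\<dots> = {j. j < Y*d \<and> j div (Y*d div a) = k div X \<and> j mod d = k mod d}" unfolding 2 1 3 ..
  finally show ?thesis .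
qed

lemma carrier_norm:
  assumes "0 < a" "0 < d" "d dvd X" "a dvd Y"
  shows "carrier_mat (a * (X div d) * d) (a * (Y div a) * d) = carrier_mat (a*X) (Y*d)"
proof -
  have 1: "(X div d) * d = X" using assms by simp
  have 2: "a * (X div d) * d = a*X" using 1 by (simp add: mult.assoc)
  have 3: "a * (Y div a) * d = Y*d" using assms(4) by simp
  show ?thesis unfolding 2 3 ..
qed

definition mchain :: "'a mat list \<Rightarrow> bool" where
  "mchain xs \<longleftrightarrow> (\<forall>i. Suc i < length xs \<longrightarrow> dim_col (xs!i) = dim_row (xs!Suc i))"

lemma mprod_Cons: "zs \<noteq> [] \<Longrightarrow> mprod (x # zs) = x * mprod zs"
  by (cases zs) simp_all

lemma mchain_tl: "mchain (x # xs) \<Longrightarrow> mchain xs"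
  unfolding mchain_def by auto

lemma mchain_hd: "mchain (x # xs) \<Longrightarrow> xs \<noteq> [] \<Longrightarrow> dim_col x = dim_row (hd xs)"
  unfolding mchain_def by (cases xs) auto

lemma mprod_dims:
  fixes xs :: "'a::semiring_1 mat list"
  shows "xs \<noteq> [] \<Longrightarrow> mchain xs \<Longrightarrow> dim_row (mprod xs) = dim_row (hd xs) \<and> dim_col (mprod xs) = dim_col (last xs)"
proof (induction xs rule: mprod.induct)
  case (3 X Y Xs)
  have "mchain (Y # Xs)" using mchain_tl[OF "3.prems"(2)] .
  then have "dim_row (mprod (Y # Xs)) = dim_row Y \<and> dim_col (mprod (Y # Xs)) = dim_col (last (Y # Xs))"
    using "3.IH" by simp
  then show ?case by simp
qed simp_all

lemma mprod_append:
  fixes xs ys :: "'a::semiring_1 mat list"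
  shows "xs \<noteq> [] \<Longrightarrow> ys \<noteq> [] \<Longrightarrow> mchain (xs @ ys) \<Longrightarrow> mprod (xs @ ys) = mprod xs * mprod ys"
proof (induction xs)
  case Nil then show ?case by simp
next
  case (Cons x xs)
  show ?case
  proof (cases "xs = []")
    case True
    then show ?thesis using Cons.prems mprod_Cons by simp
  next
    case False
    have ch: "mchain (xs @ ys)" using mchain_tl[of x "xs @ ys"] Cons.prems by simp
    have IH: "mprod (xs @ ys) = mprod xs * mprod ys" using Cons.IH[OF False Cons.prems(2) ch] .
    have chx: "mchain xs" unfolding mchain_def
    proof (intro allI impI)
      fix i assume i: "Suc i < length xs"
      then have "Suc i < length (xs @ ys)" by simp
      then have "dim_col ((xs@ys) ! i) = dim_row ((xs@ys) ! Suc i)"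
        using ch unfolding mchain_def by blast
      moreover have "(xs@ys) ! i = xs ! i" "(xs@ys) ! Suc i = xs ! Suc i" using i by (simp_all add: nth_append)
      ultimately show "dim_col (xs ! i) = dim_row (xs ! Suc i)" by simp
    qed
    have chy: "mchain ys" unfolding mchain_def
    proof (intro allI impI)
      fix i assume i: "Suc i < length ys"
      then have "Suc (length xs + i) < length (xs @ ys)" by simp
      then have "dim_col ((xs@ys) ! (length xs + i)) = dim_row ((xs@ys) ! Suc (length xs + i))"
        using ch unfolding mchain_def by blast
      moreover have "Suc (length xs + i) = length xs + Suc i" by simp
      ultimately show "dim_col (ys ! i) = dim_row (ys ! Suc i)" by (simp only: nth_append_length_plus)
    qed
    have j1: "dim_col x = dim_row (hd xs)" using mchain_hd[of x "xs @ ys"] Cons.prems False by simp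
    have j2: "dim_col (last xs) = dim_row (hd ys)"
    proof -
      let ?i = "length xs - 1"
      have "Suc ?i < length (xs @ ys)" using False Cons.prems(2) by simp
      then have "dim_col ((xs@ys) ! ?i) = dim_row ((xs@ys) ! Suc ?i)" using ch unfolding mchain_def by blast
      moreover have "(xs@ys) ! ?i = last xs" using False by (simp add: nth_append last_conv_nth)
      moreover have "(xs@ys) ! Suc ?i = hd ys" using False Cons.prems(2) by (simp add: nth_append hd_conv_nth)
      ultimately show ?thesis by simp
    qed
    have d1: "dim_row (mprod xs) = dim_row (hd xs)" "dim_col (mprod xs) = dim_col (last xs)"
      using mprod_dims[OF False chx] by (rule conjunct1, rule conjunct2)
    have d2: "dim_row (mprod ys) = dim_row (hd ys)" using mprod_dims[OF Cons.prems(2) chy] by (rule conjunct1)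
    have app: "(x # xs) @ ys = x # (xs @ ys)" by (rule append_Cons)
    have ne: "xs @ ys \<noteq> []" using False by simp
    have "mprod ((x # xs) @ ys) = x * mprod (xs @ ys)" unfolding app by (rule mprod_Cons[OF ne])
    also have "\<dots> = x * (mprod xs * mprod ys)" unfolding IH ..
    also have "\<dots> = x * mprod xs * mprod ys"
    proof (rule assoc_mult_mat[symmetric])
      show "x \<in> carrier_mat (dim_row x) (dim_col x)" by (rule carrier_matI) (rule refl)+
      show "mprod xs \<in> carrier_mat (dim_col x) (dim_col (mprod xs))" by (rule carrier_matI) (simp_all only: d1 j1)
      show "mprod ys \<in> carrier_mat (dim_col (mprod xs)) (dim_col (mprod ys))" by (rule carrier_matI) (simp_all only: d1 d2 j2)
    qed
    also have "\<dots> = mprod (x # xs) * mprod ys" unfolding mprod_Cons[OF False] ..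
    finally show ?thesis .
  qed
qed

lemma mchain_factors:
  assumes "architecture \<beta>" "length Xs = length \<beta>" "\<forall>l<length \<beta>. Xs!l \<in> factors (\<beta>!l)"
  shows "mchain Xs"
  unfolding mchain_def
proof (intro allI impI)
  fix i assume i: "Suc i < length Xs"
  have "Xs!i \<in> factors (\<beta>!i)" "Xs!Suc i \<in> factors (\<beta>!Suc i)" using assms(2,3) i by simp_all
  then have "dim_col (Xs!i) = pat_cols (\<beta>!i)" "dim_row (Xs!Suc i) = pat_rows (\<beta>!Suc i)"
    unfolding factors_def by auto
  moreover have "pat_cols (\<beta>!i) = pat_rows (\<beta>!Suc i)" using assms(1,2) i unfolding architecture_def by simp
  ultimately show "dim_col (Xs!i) = dim_row (Xs!Suc i)" by simp
qed

lemma take1: "0 < length \<beta> \<Longrightarrow> pstar_list (take 1 \<beta>) = \<beta>!0"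
  by (cases \<beta>) (simp_all add: pstar_list_single)

lemma droplast: "0 < length \<beta> \<Longrightarrow> pstar_list (drop (length \<beta> - 1) \<beta>) = \<beta>!(length \<beta> - 1)"
proof -
  assume "0 < length \<beta>"
  then have "drop (length \<beta> - 1) \<beta> = [\<beta>!(length \<beta> - 1)]"
    by (metis Cons_nth_drop_Suc Suc_diff_1 diff_less drop_all less_one order_refl zero_less_one)
  then show ?thesis by (simp add: pstar_list_single)
qed

lemma Bset2I:
  assumes "X \<in> factors p" "Y \<in> factors q"
  shows "X * Y \<in> Bset [p, q]"
proof -
  have 1: "X * Y = mprod [X, Y]" by (simp only: mprod.simps)
  have 2: "\<forall>l<length [p, q]. [X,Y] ! l \<in> factors ([p, q] ! l)"
  proof (intro allI impI)
    fix l assume "l < length [p, q]"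
    then have "l = 0 \<or> l = 1" by auto
    then show "[X,Y] ! l \<in> factors ([p, q] ! l)" using assms by auto
  qed
  have "\<exists>Xs. X * Y = mprod Xs \<and> length Xs = length [p, q] \<and> (\<forall>l<length [p, q]. Xs ! l \<in> factors ([p, q] ! l))"
    using 1 2 by (intro exI[of _ "[X,Y]"] conjI) simp_all
  then show ?thesis unfolding Bset_def by (simp only: mem_Collect_eq)
qed

lemma mprod_factors:
  "chainable_arch \<beta> \<Longrightarrow> length Xs = length \<beta> \<Longrightarrow> \<forall>l<length \<beta>. Xs!l \<in> factors (\<beta>!l) \<Longrightarrow>
   mprod Xs \<in> factors (pstar_list \<beta>)"
proof (induction Xs arbitrary: \<beta>)
  case Nil
  then show ?case unfolding chainable_arch_def architecture_def by simp
next
  case (Cons X Xs)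
  have L: "0 < length \<beta>" using Cons.prems(2) by (cases \<beta>) simp_all
  have X: "X \<in> factors (pstar_list (take 1 \<beta>))" using Cons.prems(3) L take1[OF L] by auto
  show ?case
  proof (cases "Xs = []")
    case True
    then have "length \<beta> = 1" using Cons.prems(2) by simp
    then have "take 1 \<beta> = \<beta>" by simp
    then show ?thesis using X True by simp
  next
    case False
    have "0 < length Xs" using False by (cases Xs) simp_all
    moreover have "length \<beta> = Suc (length Xs)" using Cons.prems(2) by simp
    ultimately have L2: "1 < length \<beta>" by linarith
    have chd: "chainable_arch (drop 1 \<beta>)" using chain_drop[OF Cons.prems(1) L2] .
    have "mprod Xs \<in> factors (pstar_list (drop 1 \<beta>))"
    proof (rule Cons.IH[OF chd])
      show "length Xs = length (drop 1 \<beta>)" using Cons.prems(2) by simp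
      show "\<forall>l<length (drop 1 \<beta>). Xs ! l \<in> factors (drop 1 \<beta> ! l)"
      proof (intro allI impI)
        fix l assume "l < length (drop 1 \<beta>)"
        then have "Suc l < length \<beta>" by simp
        then have "(X # Xs) ! Suc l \<in> factors (\<beta> ! Suc l)" using Cons.prems(3) by blast
        then show "Xs ! l \<in> factors (drop 1 \<beta> ! l)" using L2 by simp
      qed
    qed
    note S = split_tp[OF Cons.prems(1) order_refl L2]
    have "X * mprod Xs \<in> factors (pstar (pstar_list (take 1 \<beta>)) (pstar_list (drop 1 \<beta>)))"
      unfolding S(1,2) by (rule tp.prod_in_factors[OF S(3)]) (use X \<open>mprod Xs \<in> _\<close> S(1,2) in simp_all)
    then show ?thesis unfolding S(1,2) S(4) using mprod_Cons[OF False] by simp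
  qed
qed

lemma sub_dir:
  assumes ch: "chainable_arch \<beta>" and L: "2 \<le> length \<beta>" and A: "A \<in> Bset \<beta>"
  shows "A \<in> factors (pstar_list \<beta>)" "\<forall>l\<in>{1..length \<beta> - 1}. A \<in> Mset (beta_split \<beta> l)"
proof -
  obtain Xs where AX: "A = mprod Xs" and Xl: "length Xs = length \<beta>" and XF: "\<forall>l<length \<beta>. Xs!l \<in> factors (\<beta>!l)"
    using A unfolding Bset_def by blast
  show "A \<in> factors (pstar_list \<beta>)" unfolding AX using mprod_factors[OF ch Xl XF] .
  have arch: "architecture \<beta>" using ch unfolding chainable_arch_def by simp
  have mc: "mchain Xs" using mchain_factors[OF arch Xl XF] .
  show "\<forall>l\<in>{1..length \<beta> - 1}. A \<in> Mset (beta_split \<beta> l)"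
  proof
    fix l assume "l \<in> {1..length \<beta> - 1}"
    then have l: "1 \<le> l" "l < length \<beta>" by auto
    have Xne: "Xs \<noteq> []" using l Xl by (cases Xs) simp_all
    have ne1: "take l Xs \<noteq> []" using l Xne by simp
    have ne2: "drop l Xs \<noteq> []" using l Xl by simp
    have split: "A = mprod (take l Xs) * mprod (drop l Xs)"
      using mprod_append[OF ne1 ne2] mc unfolding AX by simp
    have f1: "mprod (take l Xs) \<in> factors (pstar_list (take l \<beta>))"
    proof (rule mprod_factors)
      show "chainable_arch (take l \<beta>)" using chain_take[OF ch] l by simp
      show "length (take l Xs) = length (take l \<beta>)" using Xl by simp
      show "\<forall>i<length (take l \<beta>). take l Xs ! i \<in> factors (take l \<beta> ! i)" using XF Xl by simp
    qed
    have f2: "mprod (drop l Xs) \<in> factors (pstar_list (drop l \<beta>))"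
    proof (rule mprod_factors)
      show "chainable_arch (drop l \<beta>)" using chain_drop[OF ch l(2)] .
      show "length (drop l Xs) = length (drop l \<beta>)" using Xl by simp
      show "\<forall>i<length (drop l \<beta>). drop l Xs ! i \<in> factors (drop l \<beta> ! i)" using XF Xl by simp
    qed
    note S = split_tp[OF ch l]
    have "A \<in> Bset [pstar_list (take l \<beta>), pstar_list (drop l \<beta>)]" unfolding split using Bset2I[OF f1 f2] .
    then have "A \<in> Mset (pstar_list (take l \<beta>), pstar_list (drop l \<beta>))"
      unfolding S(1,2) tp.B2[OF S(3)] by blast
    then show "A \<in> Mset (beta_split \<beta> l)" unfolding beta_split_def .
  qed
qed

lemma divdiv: "0 < (a::nat) \<Longrightarrow> a dvd b \<Longrightarrow> b dvd X \<Longrightarrow> u div (X div a) = u div (X div b) div (b div a)"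
proof -
  assume a: "0 < a" "a dvd b" "b dvd X"
  obtain s where s: "b = a * s" using a(2) by blast
  obtain t where t: "X = b * t" using a(3) by blast
  show ?thesis
  proof (cases "b = 0")
    case True
    then have "X = 0" using t by simp
    then show ?thesis using True by simp
  next
    case False
  have "X div a = t * s" using a(1) unfolding t s by simp
  moreover have "X div b = t" using False t by simp
  moreover have "b div a = s" using a(1) s by simp
  ultimately show ?thesis by (simp add: div_mult2_eq)
  qed
qed

lemma fact1:
  fixes i k k' X Nu Nv A0 Al BD Du Dv :: nat
  assumes "0 < A0" "A0 dvd Al" "Al dvd Nv" "Nu = Al * BD" "0 < Al" "Dv dvd Du"
   and h1: "i div X = k' div (Nu div A0)" and h2: "i mod Du = k' mod Du"
   and h3: "k div (Nv div Al) = k' div BD" and h4: "k mod Dv = k' mod Dv"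
  shows "i div X = k div (Nv div A0)" "i mod Dv = k mod Dv"
proof -
  have "k div (Nv div A0) = k div (Nv div Al) div (Al div A0)" using divdiv assms(1,2,3) by blast
  also have "\<dots> = k' div BD div (Al div A0)" unfolding h3 ..
  also have "\<dots> = k' div (Nu div Al) div (Al div A0)" using assms(4,5) by simp
  also have "\<dots> = k' div (Nu div A0)" using divdiv[of A0 Al Nu k'] assms(1,2,4) by simp
  finally show "i div X = k div (Nv div A0)" using h1 by simp
  have "i mod Dv = i mod Du mod Dv" using assms(6) by (simp add: mod_mod_cancel)
  also have "\<dots> = k' mod Du mod Dv" unfolding h2 ..
  also have "\<dots> = k' mod Dv" using assms(6) by (simp add: mod_mod_cancel)
  finally show "i mod Dv = k mod Dv" using h4 by simp
qed

lemma fact2: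
  fixes j k k' Nm Nv Al Am BDl BDm Dm Dv :: nat
  assumes "0 < Al" "Al dvd Am" "Am dvd Nm" "Nv = Am * BDm" "0 < Am" "Dm dvd Dv"
   and h1: "k div (Nv div Al) = k' div BDl" and h2: "k mod Dv = k' mod Dv"
   and h3: "j div (Nm div Am) = k div BDm" and h4: "j mod Dm = k mod Dm"
  shows "j div (Nm div Al) = k' div BDl" "j mod Dm = k' mod Dm"
proof -
  have "j div (Nm div Al) = j div (Nm div Am) div (Am div Al)" using divdiv assms(1,2,3) by blast
  also have "\<dots> = k div BDm div (Am div Al)" unfolding h3 ..
  also have "\<dots> = k div (Nv div Am) div (Am div Al)" using assms(4,5) by simp
  also have "\<dots> = k div (Nv div Al)" using divdiv[of Al Am Nv k] assms(1,2,4) by simp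
  finally show "j div (Nm div Al) = k' div BDl" using h1 by simp
  have "j mod Dm = k mod Dm" using h4 .
  also have "\<dots> = k mod Dv mod Dm" using assms(6) by (simp add: mod_mod_cancel)
  also have "\<dots> = k' mod Dv mod Dm" unfolding h2 ..
  also have "\<dots> = k' mod Dm" using assms(6) by (simp add: mod_mod_cancel)
  finally show "j mod Dm = k' mod Dm" .
qed

lemma F1_gen:
  fixes A0 X Du Dv Al BD Y1 Y2 :: nat
  assumes p: "0<A0" "0<Du" "0<Dv" "0<Al"
    and d: "Du dvd X" "Dv dvd X" "A0 dvd Y1" "A0 dvd Y2" "Dv dvd BD" "Al dvd Y2" "A0 dvd Al" "Dv dvd Du"
    and e: "Y1*Du = Al*BD"
    and i: "i \<in> Rk (A0, X div Du, Y1 div A0, Du) k'" and k: "k \<in> Ck (Al, BD div Dv, Y2 div Al, Dv) k'"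
  shows "i \<in> Rk (A0, X div Dv, Y2 div A0, Dv) k"
proof -
  have i': "i < A0*X" "i div X = k' div (Y1*Du div A0)" "i mod Du = k' mod Du"
    using i unfolding Rk_norm[OF p(1) p(2) d(1) d(3)] by simp_all
  have k': "k div (Y2*Dv div Al) = k' div BD" "k mod Dv = k' mod Dv"
    using k unfolding Ck_norm[OF p(4) p(3) d(5) d(6)] by simp_all
  have Al2: "Al dvd Y2*Dv" using d(6) by simp
  have r: "i div X = k div (Y2*Dv div A0)" "i mod Dv = k mod Dv"
    using fact1[OF p(1) d(7) Al2 e p(4) d(8) i'(2,3) k'] by simp_all
  show ?thesis unfolding Rk_norm[OF p(1) p(3) d(2) d(4)] using i'(1) r by simp
qed

lemma F2_gen:
  fixes Al Am Dm Dv BD BDm Y2 Ym :: nat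
  assumes p: "0<Al" "0<Am" "0<Dm" "0<Dv"
    and d: "Dv dvd BD" "Al dvd Y2" "Dm dvd BDm" "Am dvd Ym" "Dm dvd BD" "Al dvd Ym" "Al dvd Am" "Dm dvd Dv"
    and e: "Y2*Dv = Am*BDm"
    and k: "k \<in> Ck (Al, BD div Dv, Y2 div Al, Dv) k'" and j: "j \<in> Ck (Am, BDm div Dm, Ym div Am, Dm) k"
  shows "j \<in> Ck (Al, BD div Dm, Ym div Al, Dm) k'"
proof -
  have k': "k div (Y2*Dv div Al) = k' div BD" "k mod Dv = k' mod Dv"
    using k unfolding Ck_norm[OF p(1) p(4) d(1) d(2)] by simp_all
  have j': "j < Ym*Dm" "j div (Ym*Dm div Am) = k div BDm" "j mod Dm = k mod Dm"
    using j unfolding Ck_norm[OF p(2) p(3) d(3) d(4)] by simp_all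
  have Am2: "Am dvd Ym*Dm" using d(4) by simp
  have r: "j div (Ym*Dm div Al) = k' div BD" "j mod Dm = k' mod Dm"
    using fact2[OF p(1) d(7) Am2 e p(2) d(8) k' j'(2,3)] by simp_all
  show ?thesis unfolding Ck_norm[OF p(1) p(3) d(5) d(6)] using j'(1) r by simp
qed

lemma core:
  fixes A Z :: "complex mat" and W :: "nat \<Rightarrow> nat \<Rightarrow> complex"
  assumes tpl: "tp a0 b1l c1l du al b2l c2l dm"
    and tpl': "tp a0 b1l c1l du al b2l' c2l' dv"
    and tpm: "tp a0 b1m c1m dv am b2m c2m dm"
    and AM: "A \<in> Mset ((a0,b1l,c1l,du),(al,b2l,c2l,dm))"
    and Zf: "Z \<in> factors (a0,b1m,c1m,dv)"
    and Zform: "\<forall>i<a0*b1m*dv. \<forall>k<a0*c1m*dv. Z $$ (i,k) = (if i \<in> Rk (a0,b1m,c1m,dv) k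
        then (\<Sum>j'\<in>Ck (am,b2m,c2m,dm) k. A $$ (i,j') * W k j') else 0)"
    and F1: "\<And>k' i k. i \<in> Rk (a0,b1l,c1l,du) k' \<Longrightarrow> k \<in> Ck (al,b2l',c2l',dv) k' \<Longrightarrow> i \<in> Rk (a0,b1m,c1m,dv) k"
    and F2: "\<And>k' k j. k \<in> Ck (al,b2l',c2l',dv) k' \<Longrightarrow> j \<in> Ck (am,b2m,c2m,dm) k \<Longrightarrow> j \<in> Ck (al,b2l,c2l,dm) k'"
    and D1: "a0*b1m*dv = a0*b1l*du" and D2: "a0*c1m*dv = al*c2l'*dv"
  shows "Z \<in> Mset ((a0,b1l,c1l,du),(al,b2l',c2l',dv))"
proof -
  have AMi: "A \<in> carrier_mat (a0*b1l*du) (al*c2l*dm) \<and>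
   (\<forall>k<a0*c1l*du. vec_space.rank (dim_row (submatrix A (Rk (a0,b1l,c1l,du) k) (Ck (al,b2l,c2l,dm) k)))
       (submatrix A (Rk (a0,b1l,c1l,du) k) (Ck (al,b2l,c2l,dm) k)) \<le> a0*c1l div al)"
    using AM unfolding tp.M_iff[OF tpl] .
  have AC: "A \<in> carrier_mat (a0*b1l*du) (al*c2l*dm)" using AMi by (rule conjunct1)
  have Ark: "\<forall>k<a0*c1l*du. vec_space.rank (dim_row (submatrix A (Rk (a0,b1l,c1l,du) k) (Ck (al,b2l,c2l,dm) k)))
       (submatrix A (Rk (a0,b1l,c1l,du) k) (Ck (al,b2l,c2l,dm) k)) \<le> a0*c1l div al" using AMi by (rule conjunct2)
  have ZC: "Z \<in> carrier_mat (a0*b1m*dv) (a0*c1m*dv)" using tp.carrier_p[OF tpm Zf] .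
  have dZ: "dim_row Z = a0*b1m*dv" "dim_col Z = a0*c1m*dv" using ZC by auto
  have dA: "dim_row A = a0*b1l*du" "dim_col A = al*c2l*dm" using AC by auto
  show ?thesis unfolding tp.M_iff[OF tpl']
  proof (intro conjI allI impI)
    show "Z \<in> carrier_mat (a0*b1l*du) (al*c2l'*dv)" using ZC unfolding D1 D2 .
    fix k' assume k': "k' < a0*c1l*du"
    let ?R = "Rk (a0,b1l,c1l,du) k'" and ?C = "Ck (al,b2l,c2l,dm) k'" and ?C' = "Ck (al,b2l',c2l',dv) k'"
    let ?r = "a0*c1l div al"
    have rkA: "vec_space.rank (dim_row (submatrix A ?R ?C)) (submatrix A ?R ?C) \<le> ?r" using Ark k' by blast
    obtain w g where wg: "\<forall>i\<in>?R. \<forall>j\<in>?C. i < dim_row A \<longrightarrow> j < dim_col A \<longrightarrow>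
       A $$ (i,j) = (\<Sum>x<?r. (\<Sum>j''\<in>{j''. j'' < dim_col A \<and> j'' \<in> ?C}. A $$ (i,j'') * w j'' x) * g x j)"
      using rank_fact[OF rkA] by blast
    define F where "F i x = (\<Sum>j''\<in>{j''. j'' < dim_col A \<and> j'' \<in> ?C}. A $$ (i,j'') * w j'' x)" for i x
    define G where "G x k = (\<Sum>j'\<in>Ck (am,b2m,c2m,dm) k. g x j' * W k j')" for x k
    show "vec_space.rank (dim_row (submatrix Z ?R ?C')) (submatrix Z ?R ?C') \<le> ?r"
    proof (rule rank_le_of_frank)
      show "\<forall>i\<in>?R. \<forall>k\<in>?C'. i < dim_row Z \<longrightarrow> k < dim_col Z \<longrightarrow> Z $$ (i,k) = (\<Sum>x<?r. F i x * G x k)"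
      proof (intro ballI impI)
        fix i k assume i: "i \<in> ?R" and k: "k \<in> ?C'" and iZ: "i < dim_row Z" and kZ: "k < dim_col Z"
        have iRm: "i \<in> Rk (a0,b1m,c1m,dv) k" using F1[OF i k] .
        have ib: "i < a0*b1m*dv" using iZ dZ by simp
        have kb: "k < a0*c1m*dv" using kZ dZ by simp
        have iA: "i < dim_row A" using tp.Rk_bound[OF tpl i] dA by simp
        have "Z $$ (i,k) = (\<Sum>j'\<in>Ck (am,b2m,c2m,dm) k. A $$ (i,j') * W k j')"
          using Zform ib kb iRm by simp
        also have "\<dots> = (\<Sum>j'\<in>Ck (am,b2m,c2m,dm) k. (\<Sum>x<?r. F i x * g x j') * W k j')"
        proof (rule sum.cong[OF refl])
          fix j' assume j': "j' \<in> Ck (am,b2m,c2m,dm) k"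
          have j'l: "j' \<in> ?C" using F2[OF k j'] .
          have jA: "j' < dim_col A" using tp.Ck_bound[OF tpl j'l] dA by simp
          have "A $$ (i,j') = (\<Sum>x<?r. F i x * g x j')" using wg i j'l iA jA unfolding F_def by blast
          then show "A $$ (i,j') * W k j' = (\<Sum>x<?r. F i x * g x j') * W k j'" by simp
        qed
        also have "\<dots> = (\<Sum>j'\<in>Ck (am,b2m,c2m,dm) k. \<Sum>x<?r. F i x * (g x j' * W k j'))"
          by (simp add: sum_distrib_right mult.assoc)
        also have "\<dots> = (\<Sum>x<?r. \<Sum>j'\<in>Ck (am,b2m,c2m,dm) k. F i x * (g x j' * W k j'))"
          by (rule sum.swap)
        also have "\<dots> = (\<Sum>x<?r. F i x * G x k)"
          unfolding G_def by (simp add: sum_distrib_left)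
        finally show "Z $$ (i,k) = (\<Sum>x<?r. F i x * G x k)" .
      qed
    qed
  qed
qed

lemma sup_dir:
  "chainable_arch \<beta> \<Longrightarrow> 2 \<le> length \<beta> \<Longrightarrow> A \<in> factors (pstar_list \<beta>) \<Longrightarrow>
   (\<forall>l\<in>{1..length \<beta> - 1}. A \<in> Mset (beta_split \<beta> l)) \<Longrightarrow> A \<in> Bset \<beta>"
proof (induction "length \<beta>" arbitrary: \<beta> A rule: less_induct)
  case less
  have ch: "chainable_arch \<beta>" and L2: "2 \<le> length \<beta>" and Af0: "A \<in> factors (pstar_list \<beta>)"
    and AMs: "\<forall>l\<in>{1..length \<beta> - 1}. A \<in> Mset (beta_split \<beta> l)" using less.prems by blast+
  define m where "m = length \<beta> - 1"
  have m1: "1 \<le> m" "m < length \<beta>" using L2 unfolding m_def by simp_all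
  have Lm: "length \<beta> - 1 = m" unfolding m_def ..
  note Sm = split_tp[OF ch m1, unfolded Lm]
  let ?T1m = "(aa \<beta> 0, bb \<beta> 0 * dd \<beta> 0 div dd \<beta> (m-1), aa \<beta> (m-1) * cc \<beta> (m-1) div aa \<beta> 0, dd \<beta> (m-1))"
  let ?T2m = "(aa \<beta> m, bb \<beta> m * dd \<beta> m div dd \<beta> m, aa \<beta> m * cc \<beta> m div aa \<beta> m, dd \<beta> m)"
  have tpm: "tp (aa \<beta> 0) (bb \<beta> 0 * dd \<beta> 0 div dd \<beta> (m-1)) (aa \<beta> (m-1) * cc \<beta> (m-1) div aa \<beta> 0) (dd \<beta> (m-1))
     (aa \<beta> m) (bb \<beta> m * dd \<beta> m div dd \<beta> m) (aa \<beta> m * cc \<beta> m div aa \<beta> m) (dd \<beta> m)" using Sm(3) .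
  have bsm: "beta_split \<beta> m = (?T1m, ?T2m)" unfolding beta_split_def Sm(1,2) ..
  have mI: "m \<in> {1..length \<beta> - 1}" using m1 Lm by simp
  have "A \<in> Mset (beta_split \<beta> m)" using AMs mI by blast
  then have AMm: "A \<in> Mset (?T1m, ?T2m)" unfolding bsm .
  have Afm: "A \<in> factors (pstar ?T1m ?T2m)" unfolding Sm(4) using Af0 .
  have rkm: "\<forall>k<aa \<beta> 0 * (aa \<beta> (m-1) * cc \<beta> (m-1) div aa \<beta> 0) * dd \<beta> (m-1).
      vec_space.rank (dim_row (submatrix A (Rk ?T1m k) (Ck ?T2m k))) (submatrix A (Rk ?T1m k) (Ck ?T2m k))
        \<le> aa \<beta> 0 * (aa \<beta> (m-1) * cc \<beta> (m-1) div aa \<beta> 0) div aa \<beta> m"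
    using AMm unfolding tp.M_iff[OF tpm] by (rule conjunct2)
  obtain Z Y W where Zf: "Z \<in> factors ?T1m" and Yf: "Y \<in> factors ?T2m" and AZY: "A = Z * Y"
    and Zform: "\<forall>i<aa \<beta> 0 * (bb \<beta> 0 * dd \<beta> 0 div dd \<beta> (m-1)) * dd \<beta> (m-1).
       \<forall>k<aa \<beta> 0 * (aa \<beta> (m-1) * cc \<beta> (m-1) div aa \<beta> 0) * dd \<beta> (m-1).
       Z $$ (i,k) = (if i \<in> Rk ?T1m k then (\<Sum>j'\<in>Ck ?T2m k. A $$ (i,j') * W k j') else 0)"
    using tp.constr[OF tpm Afm rkm] by blast
  have L0: "0 < length \<beta>" using L2 by linarith
  have YF: "Y \<in> factors (\<beta>!m)" using Yf unfolding Sm(2)[symmetric] using droplast[OF L0] unfolding Lm by simp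
  have ZF: "Z \<in> factors (pstar_list (take m \<beta>))" unfolding Sm(1) using Zf .
  show ?case
  proof (cases "m = 1")
    case True
    have len: "length \<beta> = 2" using True m_def L2 by simp
    have b2: "\<beta> = [\<beta>!0, \<beta>!1]" using len2[OF len] .
    have "pstar_list (take 1 \<beta>) = \<beta>!0" using take1[OF L0] .
    then have Z0: "Z \<in> factors (\<beta>!0)" using ZF True by simp
    have Y1: "Y \<in> factors (\<beta>!1)" using YF True by simp
    have "A \<in> Bset [\<beta>!0, \<beta>!1]" unfolding AZY using Bset2I[OF Z0 Y1] .
    then show ?thesis using b2 by simp
  next
    case False
    then have m2: "2 \<le> m" using m1 by simp
    define \<beta>' where "\<beta>' = take m \<beta>"
    have lb': "length \<beta>' = m" using m1 unfolding \<beta>'_def by simp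
    have ch': "chainable_arch \<beta>'" using chain_take[OF ch] m1 unfolding \<beta>'_def by simp
    have lt: "length \<beta>' < length \<beta>" using lb' m1 by simp
    have ZF': "Z \<in> factors (pstar_list \<beta>')" using ZF unfolding \<beta>'_def .
    have ZM: "\<forall>l\<in>{1..length \<beta>' - 1}. Z \<in> Mset (beta_split \<beta>' l)"
    proof
      fix l assume "l \<in> {1..length \<beta>' - 1}"
      then have l1: "1 \<le> l" and lm: "l < m" using lb' m2 by auto
      have l2: "l < length \<beta>" using lm m1 by simp
      have l2': "l < length \<beta>'" using lm lb' by simp
      define u where "u = l - 1"
      define v where "v = m - 1"
      have uv: "Suc u = l" "Suc v = m" "u < l" "l \<le> v" "v < m" using l1 lm m1 unfolding u_def v_def by simp_all
      have ib1: "u < length \<beta>" using m1 uv by linarith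
      have ib2: "v < length \<beta>" using m1 uv by linarith
      note ib = L0 ib1 ib2
      note Sl = split_tp[OF ch l1 l2, unfolded Lm]
      note Sl' = split_tp[OF ch' l1 l2']
      have eqs: "aa \<beta>' 0 = aa \<beta> 0" "bb \<beta>' 0 = bb \<beta> 0" "dd \<beta>' 0 = dd \<beta> 0" "aa \<beta>' (l-1) = aa \<beta> (l-1)"
        "cc \<beta>' (l-1) = cc \<beta> (l-1)" "dd \<beta>' (l-1) = dd \<beta> (l-1)" "aa \<beta>' l = aa \<beta> l" "bb \<beta>' l = bb \<beta> l"
        "dd \<beta>' l = dd \<beta> l" "aa \<beta>' (m-1) = aa \<beta> (m-1)" "cc \<beta>' (m-1) = cc \<beta> (m-1)" "dd \<beta>' (m-1) = dd \<beta> (m-1)"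
        unfolding \<beta>'_def using m1 lm by (simp_all add: aa_take)
      have lb'1: "length \<beta>' - 1 = m - 1" using lb' by simp
      note Sl'' = Sl'[unfolded lb'1 eqs]
      have bs: "beta_split \<beta> l = (pstar_list (take l \<beta>), pstar_list (drop l \<beta>))" unfolding beta_split_def ..
      have lI: "l \<in> {1..length \<beta> - 1}" using l1 l2 by simp
      have "A \<in> Mset (beta_split \<beta> l)" using AMs lI by blast
      then have AMl: "A \<in> Mset ((aa \<beta> 0, bb \<beta> 0 * dd \<beta> 0 div dd \<beta> (l-1), aa \<beta> (l-1) * cc \<beta> (l-1) div aa \<beta> 0, dd \<beta> (l-1)),
          (aa \<beta> l, bb \<beta> l * dd \<beta> l div dd \<beta> m, aa \<beta> m * cc \<beta> m div aa \<beta> l, dd \<beta> m))"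
        unfolding bs Sl(1,2) .
      have p0: "0 < aa \<beta> 0" "0 < bb \<beta> 0" "0 < dd \<beta> 0" using arch_pos[OF ch ib(1)] by simp_all
      have pu: "0 < aa \<beta> u" "0 < cc \<beta> u" "0 < dd \<beta> u" using arch_pos[OF ch ib(2)] by simp_all
      have pl: "0 < aa \<beta> l" "0 < bb \<beta> l" "0 < dd \<beta> l" using arch_pos[OF ch l2] by simp_all
      have pv: "0 < aa \<beta> v" "0 < cc \<beta> v" "0 < dd \<beta> v" using arch_pos[OF ch ib(3)] by simp_all
      have pm: "0 < aa \<beta> m" "0 < bb \<beta> m" "0 < cc \<beta> m" "0 < dd \<beta> m" using arch_pos[OF ch m1(2)] by simp_all
      have a0u: "aa \<beta> 0 dvd aa \<beta> u" using arch_dvd(1)[OF ch _ ib(2)] by simp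
      have a0v: "aa \<beta> 0 dvd aa \<beta> v" using arch_dvd(1)[OF ch _ ib(3)] by simp
      have a0l: "aa \<beta> 0 dvd aa \<beta> l" using arch_dvd(1)[OF ch _ l2] by simp
      have alv: "aa \<beta> l dvd aa \<beta> v" using arch_dvd(1)[OF ch uv(4) ib(3)] .
      have alm: "aa \<beta> l dvd aa \<beta> m" using arch_dvd(1)[OF ch _ m1(2), of l] lm by simp
      have du0: "dd \<beta> u dvd dd \<beta> 0" using arch_dvd(2)[OF ch _ ib(2)] by simp
      have dv0: "dd \<beta> v dvd dd \<beta> 0" using arch_dvd(2)[OF ch _ ib(3)] by simp
      have dvl: "dd \<beta> v dvd dd \<beta> l" using arch_dvd(2)[OF ch uv(4) ib(3)] .
      have dvu: "dd \<beta> v dvd dd \<beta> u" using arch_dvd(2)[OF ch _ ib(3), of u] uv by simp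
      have dml: "dd \<beta> m dvd dd \<beta> l" using arch_dvd(2)[OF ch _ m1(2), of l] lm by simp
      have dmv: "dd \<beta> m dvd dd \<beta> v" using arch_dvd(2)[OF ch _ m1(2), of v] uv by simp
      have st_u: "aa \<beta> u * cc \<beta> u * dd \<beta> u = aa \<beta> l * bb \<beta> l * dd \<beta> l"
        using arch_step(6)[OF ch, of u] uv l2 by simp
      have st_v: "aa \<beta> v * cc \<beta> v * dd \<beta> v = aa \<beta> m * bb \<beta> m * dd \<beta> m"
        using arch_step(6)[OF ch, of v] uv m1 by simp
      have eu: "aa \<beta> u * cc \<beta> u * dd \<beta> u = aa \<beta> l * (bb \<beta> l * dd \<beta> l)" using st_u by (simp add: mult.assoc)
      have ev: "aa \<beta> v * cc \<beta> v * dd \<beta> v = aa \<beta> m * (bb \<beta> m * dd \<beta> m)" using st_v by (simp add: mult.assoc)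
      have F1: "\<And>k' i k. i \<in> Rk (aa \<beta> 0, bb \<beta> 0 * dd \<beta> 0 div dd \<beta> u, aa \<beta> u * cc \<beta> u div aa \<beta> 0, dd \<beta> u) k' \<Longrightarrow>
          k \<in> Ck (aa \<beta> l, bb \<beta> l * dd \<beta> l div dd \<beta> v, aa \<beta> v * cc \<beta> v div aa \<beta> l, dd \<beta> v) k' \<Longrightarrow>
          i \<in> Rk (aa \<beta> 0, bb \<beta> 0 * dd \<beta> 0 div dd \<beta> v, aa \<beta> v * cc \<beta> v div aa \<beta> 0, dd \<beta> v) k"
      proof -
        fix k' i k
        assume i: "i \<in> Rk (aa \<beta> 0, bb \<beta> 0 * dd \<beta> 0 div dd \<beta> u, aa \<beta> u * cc \<beta> u div aa \<beta> 0, dd \<beta> u) k'"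
          and k: "k \<in> Ck (aa \<beta> l, bb \<beta> l * dd \<beta> l div dd \<beta> v, aa \<beta> v * cc \<beta> v div aa \<beta> l, dd \<beta> v) k'"
        show "i \<in> Rk (aa \<beta> 0, bb \<beta> 0 * dd \<beta> 0 div dd \<beta> v, aa \<beta> v * cc \<beta> v div aa \<beta> 0, dd \<beta> v) k"
        proof (rule F1_gen[OF p0(1) pu(3) pv(3) pl(1) _ _ _ _ _ _ a0l dvu _ i k])
          show "dd \<beta> u dvd bb \<beta> 0 * dd \<beta> 0" using du0 by simp
          show "dd \<beta> v dvd bb \<beta> 0 * dd \<beta> 0" using dv0 by simp
          show "aa \<beta> 0 dvd aa \<beta> u * cc \<beta> u" using a0u by simp
          show "aa \<beta> 0 dvd aa \<beta> v * cc \<beta> v" using a0v by simp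
          show "dd \<beta> v dvd bb \<beta> l * dd \<beta> l" using dvl by simp
          show "aa \<beta> l dvd aa \<beta> v * cc \<beta> v" using alv by simp
          show "aa \<beta> u * cc \<beta> u * dd \<beta> u = aa \<beta> l * (bb \<beta> l * dd \<beta> l)" using eu .
        qed
      qed
      have F2: "\<And>k' k j. k \<in> Ck (aa \<beta> l, bb \<beta> l * dd \<beta> l div dd \<beta> v, aa \<beta> v * cc \<beta> v div aa \<beta> l, dd \<beta> v) k' \<Longrightarrow>
          j \<in> Ck (aa \<beta> m, bb \<beta> m * dd \<beta> m div dd \<beta> m, aa \<beta> m * cc \<beta> m div aa \<beta> m, dd \<beta> m) k \<Longrightarrow>
          j \<in> Ck (aa \<beta> l, bb \<beta> l * dd \<beta> l div dd \<beta> m, aa \<beta> m * cc \<beta> m div aa \<beta> l, dd \<beta> m) k'"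
      proof -
        fix k' k j
        assume k: "k \<in> Ck (aa \<beta> l, bb \<beta> l * dd \<beta> l div dd \<beta> v, aa \<beta> v * cc \<beta> v div aa \<beta> l, dd \<beta> v) k'"
          and j: "j \<in> Ck (aa \<beta> m, bb \<beta> m * dd \<beta> m div dd \<beta> m, aa \<beta> m * cc \<beta> m div aa \<beta> m, dd \<beta> m) k"
        show "j \<in> Ck (aa \<beta> l, bb \<beta> l * dd \<beta> l div dd \<beta> m, aa \<beta> m * cc \<beta> m div aa \<beta> l, dd \<beta> m) k'"
        proof (rule F2_gen[OF pl(1) pm(1) pm(4) pv(3) _ _ _ _ _ _ alm dmv _ k j])
          show "dd \<beta> v dvd bb \<beta> l * dd \<beta> l" using dvl by simp
          show "aa \<beta> l dvd aa \<beta> v * cc \<beta> v" using alv by simp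
          show "dd \<beta> m dvd bb \<beta> m * dd \<beta> m" by simp
          show "aa \<beta> m dvd aa \<beta> m * cc \<beta> m" by simp
          show "dd \<beta> m dvd bb \<beta> l * dd \<beta> l" using dml by simp
          show "aa \<beta> l dvd aa \<beta> m * cc \<beta> m" using alm by simp
          show "aa \<beta> v * cc \<beta> v * dd \<beta> v = aa \<beta> m * (bb \<beta> m * dd \<beta> m)" using ev .
        qed
      qed
      have D1: "aa \<beta> 0 * (bb \<beta> 0 * dd \<beta> 0 div dd \<beta> v) * dd \<beta> v = aa \<beta> 0 * (bb \<beta> 0 * dd \<beta> 0 div dd \<beta> u) * dd \<beta> u"
      proof -
        have "(bb \<beta> 0 * dd \<beta> 0 div dd \<beta> v) * dd \<beta> v = bb \<beta> 0 * dd \<beta> 0" using dv0 by simp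
        moreover have "(bb \<beta> 0 * dd \<beta> 0 div dd \<beta> u) * dd \<beta> u = bb \<beta> 0 * dd \<beta> 0" using du0 by simp
        ultimately show ?thesis by (simp only: mult.assoc)
      qed
      have D2: "aa \<beta> 0 * (aa \<beta> v * cc \<beta> v div aa \<beta> 0) * dd \<beta> v = aa \<beta> l * (aa \<beta> v * cc \<beta> v div aa \<beta> l) * dd \<beta> v"
      proof -
        have "aa \<beta> 0 * (aa \<beta> v * cc \<beta> v div aa \<beta> 0) = aa \<beta> v * cc \<beta> v" using a0v by simp
        moreover have "aa \<beta> l * (aa \<beta> v * cc \<beta> v div aa \<beta> l) = aa \<beta> v * cc \<beta> v" using alv by simp
        ultimately show ?thesis by simp
      qed
      have tpl: "tp (aa \<beta> 0) (bb \<beta> 0 * dd \<beta> 0 div dd \<beta> u) (aa \<beta> u * cc \<beta> u div aa \<beta> 0) (dd \<beta> u)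
          (aa \<beta> l) (bb \<beta> l * dd \<beta> l div dd \<beta> m) (aa \<beta> m * cc \<beta> m div aa \<beta> l) (dd \<beta> m)"
        using Sl(3) unfolding u_def .
      have tpl': "tp (aa \<beta> 0) (bb \<beta> 0 * dd \<beta> 0 div dd \<beta> u) (aa \<beta> u * cc \<beta> u div aa \<beta> 0) (dd \<beta> u)
          (aa \<beta> l) (bb \<beta> l * dd \<beta> l div dd \<beta> v) (aa \<beta> v * cc \<beta> v div aa \<beta> l) (dd \<beta> v)"
        using Sl''(3) unfolding u_def v_def .
      have tpm': "tp (aa \<beta> 0) (bb \<beta> 0 * dd \<beta> 0 div dd \<beta> v) (aa \<beta> v * cc \<beta> v div aa \<beta> 0) (dd \<beta> v)
          (aa \<beta> m) (bb \<beta> m * dd \<beta> m div dd \<beta> m) (aa \<beta> m * cc \<beta> m div aa \<beta> m) (dd \<beta> m)"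
        using tpm unfolding v_def .
      have "Z \<in> Mset ((aa \<beta> 0, bb \<beta> 0 * dd \<beta> 0 div dd \<beta> u, aa \<beta> u * cc \<beta> u div aa \<beta> 0, dd \<beta> u),
          (aa \<beta> l, bb \<beta> l * dd \<beta> l div dd \<beta> v, aa \<beta> v * cc \<beta> v div aa \<beta> l, dd \<beta> v))"
      proof (rule core[OF tpl tpl' tpm' _ _ _ F1 F2 D1 D2])
        show "A \<in> Mset ((aa \<beta> 0, bb \<beta> 0 * dd \<beta> 0 div dd \<beta> u, aa \<beta> u * cc \<beta> u div aa \<beta> 0, dd \<beta> u),
          (aa \<beta> l, bb \<beta> l * dd \<beta> l div dd \<beta> m, aa \<beta> m * cc \<beta> m div aa \<beta> l, dd \<beta> m))"
          using AMl unfolding u_def .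
        show "Z \<in> factors (aa \<beta> 0, bb \<beta> 0 * dd \<beta> 0 div dd \<beta> v, aa \<beta> v * cc \<beta> v div aa \<beta> 0, dd \<beta> v)"
          using Zf unfolding v_def .
        show "\<forall>i<aa \<beta> 0 * (bb \<beta> 0 * dd \<beta> 0 div dd \<beta> v) * dd \<beta> v.
          \<forall>k<aa \<beta> 0 * (aa \<beta> v * cc \<beta> v div aa \<beta> 0) * dd \<beta> v.
          Z $$ (i,k) = (if i \<in> Rk (aa \<beta> 0, bb \<beta> 0 * dd \<beta> 0 div dd \<beta> v, aa \<beta> v * cc \<beta> v div aa \<beta> 0, dd \<beta> v) k
            then (\<Sum>j'\<in>Ck (aa \<beta> m, bb \<beta> m * dd \<beta> m div dd \<beta> m, aa \<beta> m * cc \<beta> m div aa \<beta> m, dd \<beta> m) k. A $$ (i,j') * W k j') else 0)"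
          using Zform unfolding v_def .
      qed
      moreover have "beta_split \<beta>' l = ((aa \<beta> 0, bb \<beta> 0 * dd \<beta> 0 div dd \<beta> u, aa \<beta> u * cc \<beta> u div aa \<beta> 0, dd \<beta> u),
          (aa \<beta> l, bb \<beta> l * dd \<beta> l div dd \<beta> v, aa \<beta> v * cc \<beta> v div aa \<beta> l, dd \<beta> v))"
        unfolding beta_split_def Sl''(1,2) u_def v_def ..
      ultimately show "Z \<in> Mset (beta_split \<beta>' l)" by simp
    qed
    have "Z \<in> Bset \<beta>'" using less.hyps[OF lt ch' _ ZF' ZM] lb' m2 by simp
    then obtain Zs where Zs1: "Z = mprod Zs" and Zs2: "length Zs = length \<beta>'"
      and Zs3: "\<forall>l<length \<beta>'. Zs!l \<in> factors (\<beta>'!l)" unfolding Bset_def by blast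
    define Xs where "Xs = Zs @ [Y]"
    have lX: "length Xs = length \<beta>" using Zs2 lb' m1 unfolding Xs_def m_def by simp
    have XF: "\<forall>l<length \<beta>. Xs!l \<in> factors (\<beta>!l)"
    proof (intro allI impI)
      fix l assume l: "l < length \<beta>"
      show "Xs!l \<in> factors (\<beta>!l)"
      proof (cases "l < m")
        case True
        then have "Xs!l = Zs!l" unfolding Xs_def using Zs2 lb' by (simp add: nth_append)
        moreover have "Zs!l \<in> factors (\<beta>'!l)" using Zs3 True lb' by simp
        moreover have "\<beta>'!l = \<beta>!l" unfolding \<beta>'_def using True by simp
        ultimately show ?thesis by simp
      next
        case False
        then have lm: "l = m" using l m_def by simp
        then have "Xs!l = Y" unfolding Xs_def using Zs2 lb' by (simp add: nth_append)
        then show ?thesis using YF lm by simp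
      qed
    qed
    have arch: "architecture \<beta>" using ch unfolding chainable_arch_def by simp
    have mc: "mchain Xs" using mchain_factors[OF arch lX XF] .
    have Zne: "Zs \<noteq> []" using Zs2 lb' m2 by (cases Zs) simp_all
    have "mprod Xs = mprod Zs * mprod [Y]" unfolding Xs_def using mprod_append[OF Zne _] mc unfolding Xs_def by simp
    then have AX: "A = mprod Xs" using AZY Zs1 by simp
    have "\<exists>Xs. A = mprod Xs \<and> length Xs = length \<beta> \<and> (\<forall>l<length \<beta>. Xs ! l \<in> factors (\<beta> ! l))"
      using AX lX XF by blast
    then show ?thesis unfolding Bset_def by (simp only: mem_Collect_eq)
  qed
qed

theorem corollary7p7:
  fixes \<beta> :: "pattern list"
  assumes "chainable_arch \<beta>" and "length \<beta> \<ge> 2"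
  shows "Bset \<beta> = (\<Inter>l\<in>{1..length \<beta> - 1}. Bset [fst (beta_split \<beta> l), snd (beta_split \<beta> l)])
       \<and> (\<Inter>l\<in>{1..length \<beta> - 1}. Bset [fst (beta_split \<beta> l), snd (beta_split \<beta> l)])
           = factors (pstar_list \<beta>) \<inter> (\<Inter>l\<in>{1..length \<beta> - 1}. Mset (beta_split \<beta> l))"
proof -
  note ch = assms(1)
  have eqB: "Bset [fst (beta_split \<beta> l), snd (beta_split \<beta> l)] = factors (pstar_list \<beta>) \<inter> Mset (beta_split \<beta> l)"
    if l: "l \<in> {1..length \<beta> - 1}" for l
  proof -
    have l1: "1 \<le> l" and l2: "l < length \<beta>" using l assms(2) by auto
    note S = split_tp[OF ch l1 l2]
    show ?thesis unfolding beta_split_def fst_conv snd_conv S(1,2) tp.B2[OF S(3)] S(4) ..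
  qed
  have ne: "{1..length \<beta> - 1} \<noteq> {}" using assms(2) by simp
  have I: "(\<Inter>l\<in>{1..length \<beta> - 1}. Bset [fst (beta_split \<beta> l), snd (beta_split \<beta> l)])
     = factors (pstar_list \<beta>) \<inter> (\<Inter>l\<in>{1..length \<beta> - 1}. Mset (beta_split \<beta> l))"
  proof -
    have "(\<Inter>l\<in>{1..length \<beta> - 1}. Bset [fst (beta_split \<beta> l), snd (beta_split \<beta> l)])
       = (\<Inter>l\<in>{1..length \<beta> - 1}. factors (pstar_list \<beta>) \<inter> Mset (beta_split \<beta> l))"
      using eqB by (intro INF_cong) simp_all
    also have "\<dots> = factors (pstar_list \<beta>) \<inter> (\<Inter>l\<in>{1..length \<beta> - 1}. Mset (beta_split \<beta> l))"
      using ne by blast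
    finally show ?thesis .
  qed
  have B: "Bset \<beta> = factors (pstar_list \<beta>) \<inter> (\<Inter>l\<in>{1..length \<beta> - 1}. Mset (beta_split \<beta> l))"
  proof (rule equalityI; rule subsetI)
    fix A assume A: "A \<in> Bset \<beta>"
    show "A \<in> factors (pstar_list \<beta>) \<inter> (\<Inter>l\<in>{1..length \<beta> - 1}. Mset (beta_split \<beta> l))"
      using sub_dir[OF ch assms(2) A] by blast
  next
    fix A assume A: "A \<in> factors (pstar_list \<beta>) \<inter> (\<Inter>l\<in>{1..length \<beta> - 1}. Mset (beta_split \<beta> l))"
    show "A \<in> Bset \<beta>" using sup_dir[OF ch assms(2)] A by blast
  qed
  show ?thesis using B I by simp
qed

end
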